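(* Let $F_X$ and $F_Y$ be continuous, strictly increasing cdfs on $\mathbb{R}$ with finite second moments. For $n\in\mathbb{N}$ let $X_1,\dots,X_n$ be a random sample from $F_X$ and $Y_1,\dots,Y_n$ a random sample from $F_Y$. Let $\gamma\in[0,1]$ and assume that $c_\gamma<a_\gamma$ whenever $B_0\cap(-\infty,F_X^{-1}(\gamma))\neq\emptyset$, and $b_\gamma<d_\gamma$ whenever $B_0\cap(F_X^{-1}(\gamma),\infty)\neq\emptyset$. Let $(\gamma_n)_{n\in\mathbb{N}}$ be a $[0,1]$-valued sequence with $|\gamma_n-\gamma|=O(1/n)$. Then for every sufficiently small $\epsilon>0$ there is a constant $C_{\epsilon,\gamma}\ge 0$, independent of $n$, such that for all $n$, $$\varepsilon_{\mathcal{W}_2}\big(F_{X_{1+[(n-1)\gamma_n]:n}},F_{Y_{1+[(n-1)\gamma_n]:n}}\big)\le C_{\epsilon,\gamma}\, z_{\epsilon,\gamma}^{\,n-1},$$ where $$z_{\epsilon,\gamma}=\begin{cases}\dfrac{1-F_X(d_\gamma)}{1-F_X(b_\gamma)-\epsilon}, & \gamma=0,\\[2mm] \max\Big\{\Big(\tfrac{F_X(c_\gamma)}{F_X(a_\gamma)-\epsilon}\Big)^{\gamma}\Big(\tfrac{1-F_X(c_\gamma)}{1-F_X(a_\gamma)+\epsilon}\Big)^{1-\gamma},\ \Big(\tfrac{F_X(d_\gamma)}{F_X(b_\gamma)+\epsilon}\Big)^{\gamma}\Big(\tfrac{1-F_X(d_\gamma)}{1-F_X(b_\gamma)-\epsilon}\Big)^{1-\gamma}\Big\},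 & 0<\gamma<1,\\[2mm] \dfrac{F_X(c_\gamma)}{F_X(a_\gamma)-\epsilon}, & \gamma=1,\end{cases}$$ and $0\le z_{\epsilon,\gamma}<1$. Consequently $X_{1+[(n-1)\gamma_n]:n}\le_{\textnormal{d-ast}}Y_{1+[(n-1)\gamma_n]:n}$ as $n\to\infty$.
   Context: For a cdf $F$, $F^{-1}(u)=\inf\{x\in\mathbb{R}:F(x)\ge u\}$ (left-continuous inverse). $\mathcal{W}_2(F,G)=\big(\int_0^1(F^{-1}(u)-G^{-1}(u))^2du\big)^{1/2}$. For cdfs $F,G$ with finite second moments, $\varepsilon_{\mathcal{W}_2}(F,G)=\mathcal{W}_2^{-2}(F,G)\int_{\{u\in(0,1):F^{-1}(u)>G^{-1}(u)\}}(F^{-1}(u)-G^{-1}(u))^2du$, with the convention $\varepsilon_{\mathcal{W}_2}(F,G)=0$ if $\mathcal{W}_2(F,G)=0$. For processes $\{X_t\},\{Y_t\}$ indexed by $T\subseteq\mathbb{R}$ unbounded above (here $T=\mathbb{N}$), $X_t\le_{\textnormal{d-ast}}Y_t$ as $t\to\infty$ means $\lim_{t\to\infty}\varepsilon_{\mathcal{W}_2}(F_{X_t},F_{Y_t})=0$. $B_0=\{x\in\mathbb{R}:F_X(x)<F_Y(x)\}$, $B_2=\{x:F_X(x)\neq F_Y(x)\}$. $c_\gamma=\sup(B_0\cap(-\infty,F_X^{-1}(\gamma)))$, $d_\gamma=\inf(B_0\cap(F_X^{-1}(\gamma),\infty))$, $a_\gamma=\sup(B_2\cap(-\infty,F_X^{-1}(\gamma)))$,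 $b_\gamma=\inf(B_2\cap(F_X^{-1}(\gamma),\infty))$, with $\sup\emptyset=-\infty$, $\inf\emptyset=+\infty$, $F_X(-\infty)=0$, $F_X(+\infty)=1$. $X_{k:n}$ denotes the $k$-th smallest of $X_1,\dots,X_n$; $[x]$ is the integer part of $x$. *)

theory Defs
  imports "HOL-Analysis.Analysis" "HOL-Library.Landau_Symbols"
begin

definition is_cdf :: "(real \<Rightarrow> real) \<Rightarrow> bool" where
  "is_cdf F \<longleftrightarrow> mono F \<and> (\<forall>x. continuous (at_right x) F)
      \<and> (F \<longlongrightarrow> 0) at_bot \<and> (F \<longlongrightarrow> 1) at_top"

definition finite_second_moment :: "(real \<Rightarrow> real) \<Rightarrow> bool" where
  "finite_second_moment F \<longleftrightarrow> integrable (interval_measure F) (\<lambda>x. x\<^sup>2)"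

definition qinv :: "(real \<Rightarrow> real) \<Rightarrow> real \<Rightarrow> real" where
  "qinv F u = Inf {x. u \<le> F x}"

text \<open>The same inverse valued in the extended reals (inf of the empty set is +infinity,
  inf of an unbounded-below set is -infinity), needed for u = 0 and u = 1.\<close>
definition qinv_e :: "(real \<Rightarrow> real) \<Rightarrow> real \<Rightarrow> ereal" where
  "qinv_e F u = Inf (ereal ` {x. u \<le> F x})"

definition Fe :: "(real \<Rightarrow> real) \<Rightarrow> ereal \<Rightarrow> real" where
  "Fe F x = (if x = -\<infinity> then 0 else if x = \<infinity> then 1 else F (real_of_ereal x))"

definition W2sq :: "(real \<Rightarrow> real) \<Rightarrow> (real \<Rightarrow> real) \<Rightarrow> real" where
  "W2sq F G = (LBINT u:{0<..<1}. (qinv F u - qinv G u)\<^sup>2)"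

definition W2 :: "(real \<Rightarrow> real) \<Rightarrow> (real \<Rightarrow> real) \<Rightarrow> real" where
  "W2 F G = sqrt (W2sq F G)"

definition eps_W2 :: "(real \<Rightarrow> real) \<Rightarrow> (real \<Rightarrow> real) \<Rightarrow> real" where
  "eps_W2 F G = (if W2 F G = 0 then 0 else
     (LBINT u:{u\<in>{0<..<1}. qinv F u > qinv G u}. (qinv F u - qinv G u)\<^sup>2) / (W2 F G)\<^sup>2)"

text \<open>Almost stochastic dominance as t \<rightarrow> \<infinity> (index set T = nat), via the cdfs of X_t, Y_t.\<close>
definition d_ast_le :: "(nat \<Rightarrow> real \<Rightarrow> real) \<Rightarrow> (nat \<Rightarrow> real \<Rightarrow> real) \<Rightarrow> bool" where
  "d_ast_le FX FY \<longleftrightarrow> ((\<lambda>t. eps_W2 (FX t) (FY t)) \<longlonglongrightarrow> 0)"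

definition kth_smallest :: "nat \<Rightarrow> nat \<Rightarrow> (nat \<Rightarrow> real) \<Rightarrow> real" where
  "kth_smallest n k x = sort (map x [0..<n]) ! (k - 1)"

definition sample_measure :: "(real \<Rightarrow> real) \<Rightarrow> nat \<Rightarrow> (nat \<Rightarrow> real) measure" where
  "sample_measure F n = PiM {..<n} (\<lambda>_. interval_measure F)"

definition os_cdf :: "(real \<Rightarrow> real) \<Rightarrow> nat \<Rightarrow> nat \<Rightarrow> real \<Rightarrow> real" where
  "os_cdf F n k t = measure (sample_measure F n)
      {x \<in> space (sample_measure F n). kth_smallest n k x \<le> t}"

definition B0 :: "(real \<Rightarrow> real) \<Rightarrow> (real \<Rightarrow> real) \<Rightarrow> real set" where
  "B0 FX FY = {x. FX x < FY x}"
definition B2 :: "(real \<Rightarrow> real) \<Rightarrow> (real \<Rightarrow> real) \<Rightarrow> real set" where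
  "B2 FX FY = {x. FX x \<noteq> FY x}"

definition c_pt :: "(real \<Rightarrow> real) \<Rightarrow> (real \<Rightarrow> real) \<Rightarrow> real \<Rightarrow> ereal" where
  "c_pt FX FY g = Sup {ereal x | x. x \<in> B0 FX FY \<and> ereal x < qinv_e FX g}"
definition d_pt :: "(real \<Rightarrow> real) \<Rightarrow> (real \<Rightarrow> real) \<Rightarrow> real \<Rightarrow> ereal" where
  "d_pt FX FY g = Inf {ereal x | x. x \<in> B0 FX FY \<and> qinv_e FX g < ereal x}"
definition a_pt :: "(real \<Rightarrow> real) \<Rightarrow> (real \<Rightarrow> real) \<Rightarrow> real \<Rightarrow> ereal" where
  "a_pt FX FY g = Sup {ereal x | x. x \<in> B2 FX FY \<and> ereal x < qinv_e FX g}"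
definition b_pt :: "(real \<Rightarrow> real) \<Rightarrow> (real \<Rightarrow> real) \<Rightarrow> real \<Rightarrow> ereal" where
  "b_pt FX FY g = Inf {ereal x | x. x \<in> B2 FX FY \<and> qinv_e FX g < ereal x}"

definition z_rate :: "(real \<Rightarrow> real) \<Rightarrow> (real \<Rightarrow> real) \<Rightarrow> real \<Rightarrow> real \<Rightarrow> real" where
  "z_rate FX FY g e =
    (let a = Fe FX (a_pt FX FY g); b = Fe FX (b_pt FX FY g);
         c = Fe FX (c_pt FX FY g); d = Fe FX (d_pt FX FY g) in
     if g = 0 then (1 - d) / (1 - b - e)
     else if g = 1 then c / (a - e)
     else max ((c / (a - e)) powr g * ((1 - c) / (1 - a + e)) powr (1 - g))
              ((d / (b + e)) powr g * ((1 - d) / (1 - b - e)) powr (1 - g)))"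

end

theory Submission
  imports Defs "HOL-Probability.Probability"
begin


locale ccdf =
  fixes F :: "real \<Rightarrow> real"
  assumes cont: "continuous_on UNIV F" and sm: "strict_mono F"
    and lbot: "(F \<longlongrightarrow> 0) at_bot" and ltop: "(F \<longlongrightarrow> 1) at_top"
begin

lemma less: "x < y \<Longrightarrow> F x < F y" using sm by (simp add: strict_mono_def)
lemma le_iff: "F x \<le> F y \<longleftrightarrow> x \<le> y"
  using less by (metis less_le not_le)
lemma less_iff: "F x < F y \<longleftrightarrow> x < y"
  using less by (meson not_le le_iff)
lemma eq_iff: "F x = F y \<longleftrightarrow> x = y"
  by (metis order.antisym le_iff order_refl)

lemma pos: "0 < F x"
proof -
  have "F (x - 1) \<ge> 0"
    using lbot by (rule tendsto_upperbound) (auto simp: eventually_at_bot_linorder le_iff intro!: exI[of _ "x - 1"])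
  with less[of "x - 1" x] show ?thesis by simp
qed

lemma lt1: "F x < 1"
proof -
  have "F (x + 1) \<le> 1"
    using ltop by (rule tendsto_lowerbound) (auto simp: eventually_at_top_linorder le_iff intro!: exI[of _ "x + 1"])
  with less[of x "x + 1"] show ?thesis by simp
qed

lemma surj01: assumes "0 < v" "v < 1" shows "\<exists>x. F x = v"
proof -
  from order_tendstoD(2)[OF lbot assms(1)] obtain a where a: "\<And>x. x \<le> a \<Longrightarrow> F x < v"
    by (auto simp: eventually_at_bot_linorder)
  from order_tendstoD(1)[OF ltop assms(2)] obtain b where b: "\<And>x. x \<ge> b \<Longrightarrow> F x > v"
    by (auto simp: eventually_at_top_linorder)
  have "a \<le> b" using a b by (metis less_asym linorder_le_cases)
  have "F a \<le> v" "v \<le> F b" using a[of a] b[of b] by auto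
  then show ?thesis using IVT[of F a v b] \<open>a \<le> b\<close> cont
    by (meson UNIV_I continuous_on_eq_continuous_at open_UNIV)
qed

lemma qinv_eq: assumes "F x = v" shows "qinv F v = x"
proof -
  have "{y. v \<le> F y} = {x..}" using assms le_iff by auto
  then show ?thesis by (simp add: qinv_def)
qed

lemma qinv_F[simp]: "qinv F (F x) = x" by (rule qinv_eq) simp

lemma F_qinv: assumes "0 < v" "v < 1" shows "F (qinv F v) = v"
  using surj01[OF assms] qinv_eq by auto

lemma qinv_le_iff: assumes "0 < v" "v < 1" shows "qinv F v \<le> x \<longleftrightarrow> v \<le> F x"
  using F_qinv[OF assms] le_iff by metis

lemma qinv_less_iff: assumes "0 < v" "v < 1" shows "x < qinv F v \<longleftrightarrow> F x < v"
  using F_qinv[OF assms] less_iff by metis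

lemma qinv_mono: assumes "0 < v" "v \<le> w" "w < 1" shows "qinv F v \<le> qinv F w"
  using assms F_qinv le_iff by (metis dual_order.strict_trans1 dual_order.strict_trans2)

lemma qinv_mono_on: "mono_on {0<..<1} (qinv F)"
  by (rule mono_onI) (auto intro: qinv_mono)

lemma qinv_meas: "qinv F \<in> borel_measurable (restrict_space borel {0<..<1})"
  by (rule borel_measurable_mono_on_fnc[OF qinv_mono_on])

end


definition btail :: "nat \<Rightarrow> nat \<Rightarrow> real \<Rightarrow> real" where
  "btail n k p = (\<Sum>i=k..n. real (n choose i) * p^i * (1-p)^(n-i))"

definition bdens :: "nat \<Rightarrow> nat \<Rightarrow> real \<Rightarrow> real" where
  "bdens n k p = real n * real ((n-1) choose (k-1)) * p^(k-1) * (1-p)^(n-k)"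

lemma dtl: "((\<lambda>p::real. c * p^k * (1-p)^m) has_real_derivative
      c * (real k * p^(k-1) * (1-p)^m - p^k * (real m * (1-p)^(m-1)))) (at p)"
  apply (rule derivative_eq_intros refl)+
  apply (simp add: algebra_simps)
  done

lemma btail_deriv:
  assumes "1 \<le> k" "k \<le> n"
  shows "(btail n k has_real_derivative bdens n k p) (at p)"
  using assms(2,1)
proof (induction k rule: inc_induct)
  case base
  have "btail n n = (\<lambda>p. p ^ n)" by (simp add: btail_def fun_eq_iff)
  moreover have "bdens n n p = real n * p ^ (n - Suc 0)" by (simp add: bdens_def)
  ultimately show ?case using DERIV_pow[of n p UNIV] by simp
next
  case (step k)
  obtain k' where k: "k = Suc k'" using step(1,4) not0_implies_Suc by fastforce
  define e where "e = n - Suc (Suc k')"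
  have n: "n = Suc (Suc (k' + e))" using step(2) k unfolding e_def by linarith
  have IH: "(btail n (Suc k) has_real_derivative bdens n (Suc k) p) (at p)"
    using step by simp
  have eq: "btail n k = (\<lambda>p. real (n choose k) * p^k * (1-p)^(n-k) + btail n (Suc k) p)"
    using step by (simp add: btail_def fun_eq_iff sum.atLeast_Suc_atMost)
  have dt: "((\<lambda>p. real (n choose k) * p^k * (1-p)^(n-k)) has_real_derivative
      real (n choose k) * (real k * p^(k-1) * (1-p)^(n-k) - p^k * (real (n-k) * (1-p)^(n-k-1)))) (at p)"
    by (rule dtl)
  have i1: "real (n choose k) * real k = real n * real ((n-1) choose k')"
    using Suc_times_binomial_eq[of "Suc (k'+e)" k'] unfolding k n
    by (simp only: of_nat_mult[symmetric] diff_Suc_1)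
  have i2: "real (n choose k) * real (Suc e) = real n * real ((n-1) choose k)"
  proof -
    have "n - k = Suc e" using n k by simp
    then show ?thesis using binomial_absorb_comp[of n k]
      by (simp only: of_nat_mult[symmetric]) (simp add: mult.commute)
  qed
  have ab: "\<And>a b c d f g h i::real. a * (b * c * d - f * (g * h)) + i = (a*b)*c*d - (a*g)*f*h + i"
    by (simp add: algebra_simps)
  have e1: "n - k = Suc e" "k - 1 = k'" "n - k - 1 = e" "n - Suc k = e" "Suc k - 1 = k"
    using n k by simp_all
  have "real (n choose k) * (real k * p^(k-1) * (1-p)^(n-k) - p^k * (real (n-k) * (1-p)^(n-k-1)))
        + bdens n (Suc k) p = bdens n k p"
    unfolding ab e1 i1 i2 bdens_def by simp
  then show ?case
    unfolding eq using DERIV_add[OF dt IH] by simp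
qed

lemma bdens_pos: "1 \<le> k \<Longrightarrow> k \<le> n \<Longrightarrow> 0 < p \<Longrightarrow> p < 1 \<Longrightarrow> 0 < bdens n k p"
  by (simp add: bdens_def)

lemma bdens_nonneg: "1 \<le> k \<Longrightarrow> k \<le> n \<Longrightarrow> 0 \<le> p \<Longrightarrow> p \<le> 1 \<Longrightarrow> 0 \<le> bdens n k p"
  by (simp add: bdens_def)

lemma btail_cont: "continuous_on A (btail n k)"
  unfolding btail_def by (intro continuous_intros)

lemma btail_0: "1 \<le> k \<Longrightarrow> btail n k 0 = 0"
  by (simp add: btail_def)

lemma btail_1: assumes "k \<le> n" shows "btail n k 1 = 1"
proof -
  have "btail n k 1 = (\<Sum>i\<in>{k..n}. if i = n then 1 else 0)"
    unfolding btail_def by (rule sum.cong) auto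
  also have "\<dots> = 1" using assms by simp
  finally show ?thesis .
qed

lemma btail_strict:
  assumes "1 \<le> k" "k \<le> n" "0 \<le> x" "x < y" "y \<le> 1"
  shows "btail n k x < btail n k y"
proof (rule DERIV_pos_imp_increasing_open[OF assms(4)])
  fix z assume z: "x < z" "z < y"
  show "\<exists>d. (btail n k has_real_derivative d) (at z) \<and> 0 < d"
    using btail_deriv[OF assms(1,2)] bdens_pos[OF assms(1,2)] z assms(3,5) by force
qed (rule btail_cont)

lemma btail_range:
  assumes "1 \<le> k" "k \<le> n" "0 < x" "x < 1"
  shows "0 < btail n k x" "btail n k x < 1"
  using btail_strict[OF assms(1,2), of 0 x] btail_strict[OF assms(1,2), of x 1] assms
  by (auto simp: btail_0 btail_1)

lemma ccdf_btail:
  assumes "ccdf F" "1 \<le> k" "k \<le> n"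
  shows "ccdf (\<lambda>x. btail n k (F x))"
proof -
  interpret ccdf F by fact
  show ?thesis
  proof
    show "continuous_on UNIV (\<lambda>x. btail n k (F x))"
      by (rule continuous_on_compose2[OF btail_cont cont]) auto
    show "strict_mono (\<lambda>x. btail n k (F x))"
      by (rule strict_monoI) (use btail_strict[OF assms(2,3)] less pos lt1 in \<open>meson less_imp_le\<close>)
    have "isCont (btail n k) 0" "isCont (btail n k) 1"
      using btail_cont[of UNIV n k] by (auto simp: continuous_on_eq_continuous_at)
    then show "((\<lambda>x. btail n k (F x)) \<longlongrightarrow> 0) at_bot" "((\<lambda>x. btail n k (F x)) \<longlongrightarrow> 1) at_top"
      using isCont_tendsto_compose[OF _ lbot] isCont_tendsto_compose[OF _ ltop]
        btail_0[OF assms(2)] btail_1[OF assms(3)] by metis+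
  qed
qed


lemma sorted_nth_le_iff:
  assumes "sorted s" "1 \<le> k" "k \<le> length s"
  shows "s ! (k-1) \<le> (t::real) \<longleftrightarrow> k \<le> length (filter (\<lambda>y. y \<le> t) s)"
  using assms
proof (induction s arbitrary: k)
  case Nil then show ?case by simp
next
  case (Cons a s)
  have sa: "\<forall>y\<in>set s. a \<le> y" "sorted s" using Cons.prems by auto
  show ?case
  proof (cases "a \<le> t")
    case True
    show ?thesis
    proof (cases k)
      case 0 then show ?thesis using Cons by simp
    next
      case (Suc k')
      show ?thesis
      proof (cases k')
        case 0 then show ?thesis using Suc True by simp
      next
        case (Suc k'')
        have "s ! (k' - 1) \<le> t \<longleftrightarrow> k' \<le> length (filter (\<lambda>y. y \<le> t) s)"
          using Cons.IH[OF sa(2), of k'] Cons.prems \<open>k = Suc k'\<close> Suc by simp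
        then show ?thesis using \<open>k = Suc k'\<close> Suc True by simp
      qed
    qed
  next
    case False
    have "filter (\<lambda>y. y \<le> t) s = []" using sa False by (auto simp: filter_empty_conv)
    moreover have "a \<le> (a # s) ! (k-1)"
      using Cons.prems sa by (cases "k - 1") (auto)
    ultimately show ?thesis using False Cons.prems by auto
  qed
qed

lemma kth_smallest_le_iff:
  assumes "1 \<le> k" "k \<le> n"
  shows "kth_smallest n k x \<le> t \<longleftrightarrow> k \<le> card {i\<in>{..<n}. x i \<le> t}"
proof -
  let ?xs = "map x [0..<n]"
  have "kth_smallest n k x \<le> t \<longleftrightarrow> k \<le> length (filter (\<lambda>y. y \<le> t) (sort ?xs))"
    unfolding kth_smallest_def using assms by (intro sorted_nth_le_iff) auto
  also have "length (filter (\<lambda>y. y \<le> t) (sort ?xs)) = length (filter (\<lambda>y. y \<le> t) ?xs)"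
    by (metis mset_filter mset_sort size_mset)
  also have "\<dots> = card {i\<in>{..<n}. x i \<le> t}"
    unfolding length_filter_conv_card by (rule arg_cong[where f=card]) auto
  finally show ?thesis .
qed

lemma sum_subsets_card:
  fixes g :: "nat \<Rightarrow> real"
  shows "(\<Sum>S\<in>{S. S \<subseteq> {..<n} \<and> k \<le> card S}. g (card S)) = (\<Sum>i=k..n. real (n choose i) * g i)"
proof -
  have fin: "finite {S. S \<subseteq> {..<n} \<and> k \<le> card S}" by (rule finite_subset[of _ "Pow {..<n}"]) auto
  have "(\<Sum>S\<in>{S. S \<subseteq> {..<n} \<and> k \<le> card S}. g (card S)) =
     (\<Sum>i\<in>{k..n}. \<Sum>S\<in>{S\<in>{S. S \<subseteq> {..<n} \<and> k \<le> card S}. card S = i}. g (card S))"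
    by (rule sum.group[symmetric, OF fin]) (auto dest: card_mono[of "{..<n}", simplified])
  also have "\<dots> = (\<Sum>i\<in>{k..n}. real (n choose i) * g i)"
  proof (rule sum.cong[OF refl])
    fix i assume i: "i \<in> {k..n}"
    have "{S\<in>{S. S \<subseteq> {..<n} \<and> k \<le> card S}. card S = i} = {S. S \<subseteq> {..<n} \<and> card S = i}"
      using i by auto
    moreover have "card {S. S \<subseteq> {..<n} \<and> card S = i} = n choose i"
      using n_subsets[of "{..<n}" i] by simp
    ultimately show "(\<Sum>S\<in>{S\<in>{S. S \<subseteq> {..<n} \<and> k \<le> card S}. card S = i}. g (card S)) = real (n choose i) * g i"
      by simp
  qed
  finally show ?thesis .
qed

lemma prod_if_card:
  assumes "S \<subseteq> {..<n}"
  shows "(\<Prod>i<n. if i \<in> S then a else b) = a ^ card S * b ^ (n - card S)"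
proof -
  let ?f = "\<lambda>i. if i \<in> S then a else b"
  have "(\<Prod>i<n. ?f i) = (\<Prod>i\<in>{..<n}-S. ?f i) * (\<Prod>i\<in>S. ?f i)"
    by (rule prod.subset_diff) (use assms in auto)
  also have "(\<Prod>i\<in>{..<n}-S. ?f i) = (\<Prod>i\<in>{..<n}-S. b)" by (rule prod.cong) auto
  also have "(\<Prod>i\<in>S. ?f i) = (\<Prod>i\<in>S. a)" by (rule prod.cong) auto
  finally show ?thesis
    using assms by (simp add: card_Diff_subset finite_subset mult.commute)
qed

lemma os_cdf_eq:
  assumes "is_cdf F" "1 \<le> k" "k \<le> n"
  shows "os_cdf F n k t = btail n k (F t)"
proof -
  let ?M = "interval_measure F"
  have nd: "\<And>x y. x \<le> y \<Longrightarrow> F x \<le> F y" and rc: "\<And>a. continuous (at_right a) F"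
    and lb: "(F \<longlongrightarrow> 0) at_bot" and lt: "(F \<longlongrightarrow> 1) at_top"
    using assms(1) by (auto simp: is_cdf_def mono_def)
  interpret M: real_distribution ?M by (rule real_distribution_interval_measure[OF nd rc lb lt])
  interpret P: product_sigma_finite "\<lambda>_. ?M" by unfold_locales
  let ?P = "PiM {..<n} (\<lambda>_. ?M)"
  define A where "A S i = (if i \<in> S then {..t} else {t<..})" for S :: "nat set" and i :: nat
  define SS where "SS = {S. S \<subseteq> {..<n} \<and> k \<le> card S}"
  have finSS: "finite SS" unfolding SS_def by (rule finite_subset[of _ "Pow {..<n}"]) auto
  have Aset: "A S i \<in> sets ?M" for S i by (simp add: A_def)
  have mA: "measure ?M (A S i) = (if i \<in> S then F t else 1 - F t)" for S i
  proof -
    have "measure ?M {..t} = F t" by (rule measure_interval_measure_Iic[OF nd rc lb])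
    moreover have "measure ?M {t<..} = 1 - measure ?M {..t}"
      using M.prob_compl[of "{..t}"] by (simp add: Compl_eq_Diff_UNIV[symmetric] Compl_atMost)
    ultimately show ?thesis by (simp add: A_def)
  qed
  have eE: "emeasure ?P (PiE {..<n} (A S)) = ennreal (\<Prod>i<n. measure ?M (A S i))" for S
  proof -
    have "emeasure ?P (PiE {..<n} (A S)) = (\<Prod>i<n. emeasure ?M (A S i))"
      by (rule P.emeasure_PiM) (use Aset in auto)
    also have "\<dots> = (\<Prod>i<n. ennreal (measure ?M (A S i)))" by (simp add: M.emeasure_eq_measure)
    also have "\<dots> = ennreal (\<Prod>i<n. measure ?M (A S i))" by (rule prod_ennreal) (simp add: measure_nonneg)
    finally show ?thesis .
  qed
  have ev: "{x \<in> space ?P. kth_smallest n k x \<le> t} = (\<Union>S\<in>SS. PiE {..<n} (A S))"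
  proof (intro equalityI subsetI)
    fix x assume x: "x \<in> {x \<in> space ?P. kth_smallest n k x \<le> t}"
    let ?S = "{i\<in>{..<n}. x i \<le> t}"
    have "?S \<in> SS" using x kth_smallest_le_iff[OF assms(2,3)] by (auto simp: SS_def)
    moreover have "x \<in> PiE {..<n} (A ?S)"
      using x unfolding space_PiM PiE_iff A_def by simp
    ultimately show "x \<in> (\<Union>S\<in>SS. PiE {..<n} (A S))" by blast
  next
    fix x assume "x \<in> (\<Union>S\<in>SS. PiE {..<n} (A S))"
    then obtain S where S: "S \<in> SS" "x \<in> PiE {..<n} (A S)" by blast
    have xi: "x i \<le> t \<longleftrightarrow> i \<in> S" if "i < n" for i
    proof -
      have "x i \<in> A S i" using S(2) that by (auto simp: PiE_iff)
      then show ?thesis by (cases "i \<in> S") (auto simp: A_def)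
    qed
    have "{i\<in>{..<n}. x i \<le> t} = S" using xi S(1) by (auto simp: SS_def)
    then show "x \<in> {x \<in> space ?P. kth_smallest n k x \<le> t}"
    proof -
      have "x \<in> space ?P" using S(2) by (auto simp: space_PiM PiE_iff)
      moreover have "kth_smallest n k x \<le> t"
        using kth_smallest_le_iff[OF assms(2,3), of x t] \<open>{i\<in>{..<n}. x i \<le> t} = S\<close> S(1)
        by (simp add: SS_def)
      ultimately show ?thesis by simp
    qed
  qed
  have disj: "disjoint_family_on (\<lambda>S. PiE {..<n} (A S)) SS"
  proof (unfold disjoint_family_on_def, intro ballI impI)
    fix S T assume "S \<in> SS" "T \<in> SS" "S \<noteq> T"
    then obtain i where i: "i < n" "i \<in> S \<longleftrightarrow> i \<notin> T" by (auto simp: SS_def)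
    show "PiE {..<n} (A S) \<inter> PiE {..<n} (A T) = {}"
    proof (intro equals0I)
      fix x assume "x \<in> PiE {..<n} (A S) \<inter> PiE {..<n} (A T)"
      then have "x i \<in> A S i" "x i \<in> A T i" using i by (auto simp: PiE_iff)
      then show False using i(2) by (cases "i \<in> S") (auto simp: A_def)
    qed
  qed
  have "os_cdf F n k t = measure ?P (\<Union>S\<in>SS. PiE {..<n} (A S))"
    unfolding os_cdf_def sample_measure_def ev ..
  also have "\<dots> = (\<Sum>S\<in>SS. measure ?P (PiE {..<n} (A S)))"
  proof (rule measure_finite_Union[OF finSS _ disj])
    show "(\<lambda>S. PiE {..<n} (A S)) ` SS \<subseteq> sets ?P"
      using Aset by (auto intro!: sets_PiM_I_finite)
  qed (simp add: eE)
  also have "\<dots> = (\<Sum>S\<in>SS. F t ^ card S * (1 - F t) ^ (n - card S))"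
  proof (rule sum.cong[OF refl])
    fix S assume S: "S \<in> SS"
    have "measure ?P (PiE {..<n} (A S)) = (\<Prod>i<n. measure ?M (A S i))"
      unfolding measure_def eE by (simp add: prod_nonneg measure_nonneg)
    also have "\<dots> = (\<Prod>i<n. if i \<in> S then F t else 1 - F t)" by (simp add: mA)
    also have "\<dots> = F t ^ card S * (1 - F t) ^ (n - card S)"
      using S by (simp add: SS_def prod_if_card)
    finally show "measure ?P (PiE {..<n} (A S)) = F t ^ card S * (1 - F t) ^ (n - card S)" .
  qed
  also have "\<dots> = btail n k (F t)"
    using sum_subsets_card[of "\<lambda>i. F t ^ i * (1 - F t) ^ (n - i)" n k] unfolding SS_def btail_def
    by (simp add: mult.assoc)
  finally show ?thesis .
qed


context ccdf begin

lemma is_cdf: "is_cdf F"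
  unfolding is_cdf_def
proof (intro conjI allI)
  show "mono F" using le_iff by (auto simp: mono_def)
  fix x show "continuous (at_right x) F"
    using cont by (meson UNIV_I continuous_on_eq_continuous_within continuous_within_subset subset_UNIV)
qed (use lbot ltop in auto)

lemma qinv_meas_lborel: "qinv F \<in> borel_measurable (restrict_space lborel {0<..<1})"
  using qinv_meas by (simp add: measurable_cong_sets[OF sets_restrict_space_cong[OF sets_lborel] refl])

lemma moment_integrable:
  assumes "finite_second_moment F"
  shows "integrable lborel (\<lambda>v. indicator {0<..<1} v * (qinv F v)\<^sup>2)"
proof -
  let ?U = "restrict_space lborel {0<..<1::real}"
  interpret U: prob_space ?U by (rule prob_space_restrict_space) auto
  have Qm: "qinv F \<in> measurable ?U borel" by (rule qinv_meas_lborel)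
  let ?D = "distr ?U borel (qinv F)"
  have nd: "\<And>x y. x \<le> y \<Longrightarrow> F x \<le> F y" and rc: "\<And>a. continuous (at_right a) F"
    using is_cdf by (auto simp: is_cdf_def mono_def)
  have rd1: "real_distribution ?D" using Qm by (rule U.real_distribution_distr)
  have rd2: "real_distribution (interval_measure F)"
    by (rule real_distribution_interval_measure[OF nd rc lbot ltop])
  have "cdf ?D = F"
  proof
    fix x
    have "cdf ?D x = measure ?U (qinv F -` {..x} \<inter> space ?U)"
      unfolding cdf_def using Qm by (simp add: measure_distr)
    also have "qinv F -` {..x} \<inter> space ?U = {0<..F x}"
    proof (intro equalityI subsetI)
      fix v assume "v \<in> qinv F -` {..x} \<inter> space ?U"
      then show "v \<in> {0<..F x}" using qinv_le_iff[of v x] by (auto simp: space_restrict_space)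
    next
      fix v assume v: "v \<in> {0<..F x}"
      then have "v < 1" using lt1[of x] by simp
      then show "v \<in> qinv F -` {..x} \<inter> space ?U" using qinv_le_iff[of v x] v by (auto simp: space_restrict_space)
    qed
    also have "measure ?U {0<..F x} = measure lborel {0<..F x}"
      using lt1[of x] by (intro measure_restrict_space) auto
    also have "\<dots> = F x" using pos[of x] by simp
    finally show "cdf ?D x = F x" .
  qed
  moreover have "cdf (interval_measure F) = F" by (rule cdf_interval_measure[OF nd rc lbot])
  ultimately have D: "?D = interval_measure F" using cdf_unique[OF rd1 rd2] by simp
  have "integrable ?D (\<lambda>x. x\<^sup>2)" using assms unfolding D finite_second_moment_def .
  then have "integrable ?U (\<lambda>v. (qinv F v)\<^sup>2)"
    using integrable_distr_eq[OF Qm, of "\<lambda>x. x\<^sup>2"] by simp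
  then show ?thesis by (subst (asm) integrable_restrict_space) auto
qed

end

lemma subst_lemma:
  fixes B bd f :: "real \<Rightarrow> real"
  assumes deriv: "\<And>x. x \<in> {0..1} \<Longrightarrow> (B has_real_derivative bd x) (at x)"
    and cont: "continuous_on {0..1} bd" and nonneg: "\<And>x. x \<in> {0..1} \<Longrightarrow> 0 \<le> bd x"
    and B0: "B 0 = 0" and B1: "B 1 = 1"
    and fm: "f \<in> borel_measurable borel" and fnn: "\<And>u. 0 \<le> f u"
    and fin: "integrable lborel (\<lambda>v. f (B v) * bd v * indicator {0..1} v)"
  shows "integrable lborel (\<lambda>u. f u * indicator {0..1} u)"
    and "(LBINT u. f u * indicator {0..1} u) = (LBINT v. f (B v) * bd v * indicator {0..1} v)"
proof -
  have sub: "(\<integral>\<^sup>+x. f x * indicator {B 0..B 1} x \<partial>lborel) =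
             (\<integral>\<^sup>+x. f (B x) * bd x * indicator {0..1} x \<partial>lborel)"
    by (rule nn_integral_substitution[OF _ deriv cont nonneg])
       (use fm in \<open>auto simp: set_borel_measurable_def intro!: borel_measurable_scaleR borel_measurable_indicator\<close>)
  have nnR: "0 \<le> f (B x) * bd x * indicator {0..1} x" for x
    using fnn nonneg by (auto simp: indicator_def)
  have nnL: "0 \<le> f x * indicator {0..1} x" for x
    using fnn by (auto simp: indicator_def)
  have R: "(\<integral>\<^sup>+x. f (B x) * bd x * indicator {0..1} x \<partial>lborel) = (LBINT v. f (B v) * bd v * indicator {0..1} v)"
    by (rule nn_integral_eq_integral[OF fin]) (simp add: nnR)
  have mL: "(\<lambda>u. f u * indicator {0..1} u) \<in> borel_measurable lborel" using fm by simp
  have L1: "(\<integral>\<^sup>+x. f x * indicator {0..1} x \<partial>lborel) = ennreal (LBINT v. f (B v) * bd v * indicator {0..1} v)"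
    using sub R B0 B1 by simp
  show int: "integrable lborel (\<lambda>u. f u * indicator {0..1} u)"
    by (rule integrableI_nn_integral_finite[OF mL _ L1]) (simp add: nnL)
  have "(\<integral>\<^sup>+x. f x * indicator {0..1} x \<partial>lborel) = (LBINT u. f u * indicator {0..1} u)"
    by (rule nn_integral_eq_integral[OF int]) (simp add: nnL)
  then have "ennreal (LBINT u. f u * indicator {0..1} u) = ennreal (LBINT v. f (B v) * bd v * indicator {0..1} v)"
    using L1 by simp
  moreover have "0 \<le> (LBINT u. f u * indicator {0..1} u)" by (rule integral_nonneg_AE) (simp add: nnL)
  moreover have "0 \<le> (LBINT v. f (B v) * bd v * indicator {0..1} v)" by (rule integral_nonneg_AE) (simp add: nnR)
  ultimately show "(LBINT u. f u * indicator {0..1} u) = (LBINT v. f (B v) * bd v * indicator {0..1} v)"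
    by simp
qed


lemma meas01:
  fixes f :: "real \<Rightarrow> real"
  assumes "f \<in> borel_measurable (restrict_space borel {0<..<1})"
  shows "(\<lambda>v. indicator {0<..<1} v * f v) \<in> borel_measurable borel"
proof -
  have "(\<lambda>x. if x \<in> {0<..<1} then f x else 0) \<in> borel_measurable borel"
    using measurable_restrict_space_iff[of "{0<..<1::real}" borel 0 borel f] assms by simp
  also have "(\<lambda>x. if x \<in> {0<..<1} then f x else 0) = (\<lambda>v. indicator {0<..<1} v * f v)"
    by (auto simp: indicator_def fun_eq_iff)
  finally show ?thesis .
qed

lemma bdens_le: "1 \<le> k \<Longrightarrow> k \<le> n \<Longrightarrow> 0 \<le> p \<Longrightarrow> p \<le> 1 \<Longrightarrow> bdens n k p \<le> real n * real ((n-1) choose (k-1))"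
proof -
  assume a: "1 \<le> k" "k \<le> n" "0 \<le> p" "p \<le> 1"
  have "p^(k-1) * (1-p)^(n-k) \<le> 1" using a by (intro mult_le_one power_le_one) auto
  from mult_left_le[OF this, of "real n * real ((n-1) choose (k-1))"]
  show ?thesis unfolding bdens_def by (simp add: mult.assoc)
qed

lemma bdens_cont: "continuous_on A (bdens n k)"
  unfolding bdens_def by (intro continuous_intros)

locale two =
  X: ccdf FX + Y: ccdf FY for FX FY +
  assumes momX: "finite_second_moment FX" and momY: "finite_second_moment FY"
begin

definition h where "h v = (qinv FX v - qinv FY v)\<^sup>2"
definition Rv where "Rv = {v\<in>{0<..<1}. qinv FY v < qinv FX v}"

lemma h_meas: "h \<in> borel_measurable (restrict_space borel {0<..<1})"
  unfolding h_def by (intro borel_measurable_power borel_measurable_diff X.qinv_meas Y.qinv_meas)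

lemma h_nonneg: "0 \<le> h v" by (simp add: h_def)

lemma h_int: "integrable lborel (\<lambda>v. indicator {0<..<1} v * h v)"
proof -
  have "integrable lborel (\<lambda>v. 2 * (indicator {0<..<1} v * (qinv FX v)\<^sup>2) + 2 * (indicator {0<..<1} v * (qinv FY v)\<^sup>2))"
    using X.moment_integrable[OF momX] Y.moment_integrable[OF momY] by auto
  then show ?thesis
  proof (rule Bochner_Integration.integrable_bound)
    show "(\<lambda>v. indicator {0<..<1} v * h v) \<in> borel_measurable lborel"
      using meas01[OF h_meas] by simp
    show "AE x in lborel. norm (indicator {0<..<1} x * h x) \<le> norm (2 * (indicator {0<..<1} x * (qinv FX x)\<^sup>2) + 2 * (indicator {0<..<1} x * (qinv FY x)\<^sup>2))"
    proof (rule AE_I2)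
      fix x
      have e: "2 * (qinv FX x)\<^sup>2 + 2 * (qinv FY x)\<^sup>2 - (qinv FX x - qinv FY x)\<^sup>2 = (qinv FX x + qinv FY x)\<^sup>2"
        by (simp add: power2_eq_square algebra_simps)
      have "(qinv FX x - qinv FY x)\<^sup>2 \<le> 2 * (qinv FX x)\<^sup>2 + 2 * (qinv FY x)\<^sup>2"
        using e zero_le_power2[of "qinv FX x + qinv FY x"] by linarith
      then show "norm (indicator {0<..<1} x * h x) \<le> norm (2 * (indicator {0<..<1} x * (qinv FX x)\<^sup>2) + 2 * (indicator {0<..<1} x * (qinv FY x)\<^sup>2))"
        by (auto simp: indicator_def h_def)
    qed
  qed
qed

lemma Rv_sub: "Rv \<subseteq> {0<..<1}" by (auto simp: Rv_def)

lemma hb_meas: "(\<lambda>v. indicator {0<..<1} v * (h v * bdens n k v)) \<in> borel_measurable borel"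
proof -
  have "bdens n k \<in> borel_measurable borel" by (rule borel_measurable_continuous_onI[OF bdens_cont])
  then have "(\<lambda>v. h v * bdens n k v) \<in> borel_measurable (restrict_space borel {0<..<1})"
    by (intro borel_measurable_times h_meas measurable_restrict_space1)
  then show ?thesis by (rule meas01)
qed

lemma hbR_meas: "(\<lambda>v. indicator Rv v * (h v * bdens n k v)) \<in> borel_measurable borel"
proof -
  have "bdens n k \<in> borel_measurable borel" by (rule borel_measurable_continuous_onI[OF bdens_cont])
  then have m: "(\<lambda>v. if qinv FY v < qinv FX v then h v * bdens n k v else 0) \<in> borel_measurable (restrict_space borel {0<..<1})"
    by (intro measurable_If borel_measurable_times h_meas measurable_restrict_space1 borel_measurable_less
        X.qinv_meas Y.qinv_meas borel_measurable_const)
  have eq: "(\<lambda>v. indicator Rv v * (h v * bdens n k v)) =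
     (\<lambda>v. indicator {0<..<1} v * (if qinv FY v < qinv FX v then h v * bdens n k v else 0))"
    by (auto simp: fun_eq_iff indicator_def Rv_def)
  from meas01[OF m] show ?thesis unfolding eq .
qed

lemma hb_int:
  assumes "1 \<le> k" "k \<le> n"
  shows "integrable lborel (\<lambda>v. indicator {0<..<1} v * (h v * bdens n k v))"
  using integrable_mult_right[OF h_int, of "real n * real ((n-1) choose (k-1))"]
proof (rule Bochner_Integration.integrable_bound)
  show "(\<lambda>v. indicator {0<..<1} v * (h v * bdens n k v)) \<in> borel_measurable lborel"
    using hb_meas by simp
  show "AE x in lborel. norm (indicator {0<..<1} x * (h x * bdens n k x)) \<le> norm (real n * real ((n-1) choose (k-1)) * (indicator {0<..<1} x * h x))"
  proof (rule AE_I2)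
    fix x
    show "norm (indicator {0<..<1} x * (h x * bdens n k x)) \<le> norm (real n * real ((n-1) choose (k-1)) * (indicator {0<..<1} x * h x))"
    proof (cases "x \<in> {0<..<1}")
      case True
      have "h x * bdens n k x \<le> h x * (real n * real ((n-1) choose (k-1)))"
        by (rule mult_left_mono) (use bdens_le[OF assms, of x] h_nonneg[of x] True in auto)
      then show ?thesis
        using True bdens_nonneg[OF assms, of x] h_nonneg[of x] by (simp add: abs_mult mult.commute)
    qed simp
  qed
qed

lemma hbR_int:
  assumes "1 \<le> k" "k \<le> n"
  shows "integrable lborel (\<lambda>v. indicator Rv v * (h v * bdens n k v))"
  using hb_int[OF assms]
proof (rule Bochner_Integration.integrable_bound)
  show "(\<lambda>v. indicator Rv v * (h v * bdens n k v)) \<in> borel_measurable lborel"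
    using hbR_meas by simp
  show "AE x in lborel. norm (indicator Rv x * (h x * bdens n k x)) \<le> norm (indicator {0<..<1} x * (h x * bdens n k x))"
    using Rv_sub by (intro AE_I2) (auto simp: indicator_def)
qed

end


context two begin

definition Wr where "Wr n k = (LBINT v. indicator {0<..<1} v * (h v * bdens n k v))"
definition Nr where "Nr n k = (LBINT v. indicator Rv v * (h v * bdens n k v))"

lemma Wr_nonneg: "1 \<le> k \<Longrightarrow> k \<le> n \<Longrightarrow> 0 \<le> Wr n k"
  unfolding Wr_def by (rule integral_nonneg_AE) (auto simp: indicator_def h_nonneg bdens_nonneg)

lemma Nr_nonneg: "1 \<le> k \<Longrightarrow> k \<le> n \<Longrightarrow> 0 \<le> Nr n k"
proof -
  assume k: "1 \<le> k" "k \<le> n"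
  have "0 \<le> indicator Rv v * (h v * bdens n k v)" for v
    using Rv_sub bdens_nonneg[OF k, of v] h_nonneg[of v] by (auto simp: indicator_def)
  then show ?thesis unfolding Nr_def by (intro integral_nonneg_AE AE_I2)
qed

lemma Nr_le_Wr: "1 \<le> k \<Longrightarrow> k \<le> n \<Longrightarrow> Nr n k \<le> Wr n k"
  unfolding Nr_def Wr_def using Rv_sub
  by (intro integral_mono hbR_int hb_int) (auto simp: indicator_def h_nonneg bdens_nonneg)

lemma eps_formula:
  assumes k: "1 \<le> k" "k \<le> n"
  shows "eps_W2 (os_cdf FX n k) (os_cdf FY n k) = (if Wr n k = 0 then 0 else Nr n k / Wr n k)"
proof -
  let ?B = "btail n k"
  define GX where "GX t = ?B (FX t)" for t
  define GY where "GY t = ?B (FY t)" for t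
  have cX: "ccdf FX" and cY: "ccdf FY" by unfold_locales
  have oX: "os_cdf FX n k = GX" unfolding GX_def by (rule ext, rule os_cdf_eq[OF X.is_cdf k])
  have oY: "os_cdf FY n k = GY" unfolding GY_def by (rule ext, rule os_cdf_eq[OF Y.is_cdf k])
  interpret GX: ccdf GX unfolding GX_def by (rule ccdf_btail[OF cX k])
  interpret GY: ccdf GY unfolding GY_def by (rule ccdf_btail[OF cY k])
  have qBX: "qinv GX (?B v) = qinv FX v" if "0 < v" "v < 1" for v
    by (rule GX.qinv_eq) (simp add: GX_def X.F_qinv that)
  have qBY: "qinv GY (?B v) = qinv FY v" if "0 < v" "v < 1" for v
    by (rule GY.qinv_eq) (simp add: GY_def Y.F_qinv that)
  have Br: "0 < ?B v \<and> ?B v < 1" if "0 < v" "v < 1" for v using btail_range[OF k that] by simp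
  have B0: "?B 0 = 0" by (rule btail_0[OF k(1)])
  have B1: "?B 1 = 1" by (rule btail_1[OF k(2)])
  have deriv: "\<And>x. x \<in> {0..1} \<Longrightarrow> (?B has_real_derivative bdens n k x) (at x)"
    using btail_deriv[OF k] by blast
  have cont: "continuous_on {0..1} (bdens n k)" by (rule bdens_cont)
  have bnn: "\<And>x. x \<in> {0..1} \<Longrightarrow> 0 \<le> bdens n k x" using bdens_nonneg[OF k] by auto
  define \<phi> where "\<phi> u = (qinv GX u - qinv GY u)\<^sup>2" for u
  have \<phi>m: "\<phi> \<in> borel_measurable (restrict_space borel {0<..<1})"
    unfolding \<phi>_def by (intro borel_measurable_power borel_measurable_diff GX.qinv_meas GY.qinv_meas)
  define f1 where "f1 u = indicator {0<..<1} u * \<phi> u" for u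
  have f1m: "f1 \<in> borel_measurable borel" unfolding f1_def by (rule meas01[OF \<phi>m])
  have f1nn: "\<And>u. 0 \<le> f1 u" by (simp add: f1_def \<phi>_def)
  have f1v: "(\<lambda>v. f1 (?B v) * bdens n k v * indicator {0..1} v) = (\<lambda>v. indicator {0<..<1} v * (h v * bdens n k v))"
  proof
    fix v
    show "f1 (?B v) * bdens n k v * indicator {0..1} v = indicator {0<..<1} v * (h v * bdens n k v)"
    proof (cases "0 < v \<and> v < 1")
      case True then show ?thesis using Br[of v] qBX[of v] qBY[of v]
        by (simp add: f1_def \<phi>_def h_def indicator_def)
    next
      case False
      then have "v \<notin> {0..1} \<or> v = 0 \<or> v = 1" by auto
      then show ?thesis using B0 B1 by (auto simp: f1_def indicator_def)
    qed
  qed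
  have f1fin: "integrable lborel (\<lambda>v. f1 (?B v) * bdens n k v * indicator {0..1} v)"
    unfolding f1v by (rule hb_int[OF k])
  have W2sq: "W2sq GX GY = Wr n k"
  proof -
    have "W2sq GX GY = (LBINT u. f1 u * indicator {0..1} u)"
      unfolding W2sq_def set_lebesgue_integral_def f1_def \<phi>_def
      by (rule Bochner_Integration.integral_cong) (auto simp: indicator_def)
    also have "\<dots> = (LBINT v. f1 (?B v) * bdens n k v * indicator {0..1} v)"
      by (rule subst_lemma(2)[OF deriv cont bnn B0 B1 f1m f1nn f1fin])
    also have "\<dots> = Wr n k" unfolding f1v Wr_def ..
    finally show ?thesis .
  qed
  define f2 where "f2 u = indicator {0<..<1} u * (if qinv GY u < qinv GX u then \<phi> u else 0)" for u
  have f2m: "f2 \<in> borel_measurable borel" unfolding f2_def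
    by (rule meas01) (intro measurable_If \<phi>m borel_measurable_less GX.qinv_meas GY.qinv_meas borel_measurable_const)
  have f2nn: "\<And>u. 0 \<le> f2 u" by (simp add: f2_def \<phi>_def)
  have f2v: "(\<lambda>v. f2 (?B v) * bdens n k v * indicator {0..1} v) = (\<lambda>v. indicator Rv v * (h v * bdens n k v))"
  proof
    fix v
    show "f2 (?B v) * bdens n k v * indicator {0..1} v = indicator Rv v * (h v * bdens n k v)"
    proof (cases "0 < v \<and> v < 1")
      case True then show ?thesis using Br[of v] qBX[of v] qBY[of v]
        by (simp add: f2_def \<phi>_def h_def indicator_def Rv_def)
    next
      case False
      then have "v \<notin> {0..1} \<or> v = 0 \<or> v = 1" by auto
      then show ?thesis using B0 B1 by (auto simp: f2_def indicator_def Rv_def)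
    qed
  qed
  have f2fin: "integrable lborel (\<lambda>v. f2 (?B v) * bdens n k v * indicator {0..1} v)"
    unfolding f2v by (rule hbR_int[OF k])
  have Num: "(LBINT u:{u\<in>{0<..<1}. qinv GX u > qinv GY u}. (qinv GX u - qinv GY u)\<^sup>2) = Nr n k"
  proof -
    have "(LBINT u:{u\<in>{0<..<1}. qinv GX u > qinv GY u}. (qinv GX u - qinv GY u)\<^sup>2) = (LBINT u. f2 u * indicator {0..1} u)"
      unfolding set_lebesgue_integral_def f2_def \<phi>_def
      by (rule Bochner_Integration.integral_cong) (auto simp: indicator_def)
    also have "\<dots> = (LBINT v. f2 (?B v) * bdens n k v * indicator {0..1} v)"
      by (rule subst_lemma(2)[OF deriv cont bnn B0 B1 f2m f2nn f2fin])
    also have "\<dots> = Nr n k" unfolding f2v Nr_def ..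
    finally show ?thesis .
  qed
  have Wn: "0 \<le> Wr n k" by (rule Wr_nonneg[OF k])
  have W2: "W2 GX GY = sqrt (Wr n k)" unfolding W2_def W2sq ..
  show ?thesis
    unfolding oX oY eps_W2_def Num W2 using Wn by simp
qed

end


definition gf :: "real \<Rightarrow> real \<Rightarrow> real" where
  "gf a p = a * ln p + (1 - a) * ln (1 - p)"

definition lam :: "real \<Rightarrow> real" where
  "lam p = \<bar>ln p\<bar> + \<bar>ln (1 - p)\<bar>"

lemma gf_deriv:
  assumes "0 < p" "p < 1"
  shows "(gf a has_real_derivative (a - p) / (p * (1 - p))) (at p)"
proof -
  have "(gf a has_real_derivative a * (1 / p) + (1 - a) * (- 1 / (1 - p))) (at p)"
  proof -
    have d1: "(ln has_real_derivative 1 / p) (at p)" by (rule DERIV_ln_divide) (use assms in simp)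
    have d0: "((\<lambda>x. 1 - x) has_real_derivative - 1) (at p)"
      using DERIV_diff[OF DERIV_const[of 1] DERIV_ident] by simp
    have d2: "((\<lambda>x. ln (1 - x)) has_real_derivative 1 / (1 - p) * (- 1)) (at p)"
      by (rule DERIV_chain2[OF DERIV_ln_divide d0]) (use assms in simp)
    show ?thesis unfolding gf_def using DERIV_add[OF DERIV_cmult[OF d1, of a] DERIV_cmult[OF d2, of "1 - a"]]
      by (simp add: divide_simps)
  qed
  moreover have "a * (1 / p) + (1 - a) * (- 1 / (1 - p)) = (a - p) / (p * (1 - p))"
    using assms by (simp add: field_simps)
  ultimately show ?thesis by simp
qed

lemma gf_cont: "0 < x \<Longrightarrow> y < 1 \<Longrightarrow> continuous_on {x..y} (gf a)"
  unfolding gf_def by (intro continuous_intros) auto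

lemma gf_up: assumes "0 < x" "x \<le> y" "y \<le> a" "y < 1" shows "gf a x \<le> gf a y"
proof (rule DERIV_nonneg_imp_increasing_open[OF assms(2) _ gf_cont[OF assms(1,4)]])
  fix p assume p: "x < p" "p < y"
  then show "\<exists>d. (gf a has_real_derivative d) (at p) \<and> 0 \<le> d"
    using gf_deriv[of p a] assms by (intro exI[of _ "(a - p) / (p * (1 - p))"]) (auto intro!: divide_nonneg_pos)
qed

lemma gf_up_strict: assumes "0 < x" "x < y" "y \<le> a" "y < 1" shows "gf a x < gf a y"
proof (rule DERIV_pos_imp_increasing_open[OF assms(2) _ gf_cont[OF assms(1,4)]])
  fix p assume p: "x < p" "p < y"
  then show "\<exists>d. (gf a has_real_derivative d) (at p) \<and> 0 < d"
    using gf_deriv[of p a] assms by (intro exI[of _ "(a - p) / (p * (1 - p))"]) (auto intro!: divide_pos_pos)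
qed

lemma gf_down: assumes "0 < x" "x \<le> y" "a \<le> x" "y < 1" shows "gf a y \<le> gf a x"
proof (rule DERIV_nonpos_imp_decreasing_open[OF assms(2) _ gf_cont[OF assms(1,4)]])
  fix p assume p: "x < p" "p < y"
  then show "\<exists>d. (gf a has_real_derivative d) (at p) \<and> d \<le> 0"
    using gf_deriv[of p a] assms by (intro exI[of _ "(a - p) / (p * (1 - p))"]) (auto intro!: divide_nonpos_pos)
qed

lemma gf_down_strict: assumes "0 < x" "x < y" "a \<le> x" "y < 1" shows "gf a y < gf a x"
proof (rule DERIV_neg_imp_decreasing_open[OF assms(2) _ gf_cont[OF assms(1,4)]])
  fix p assume p: "x < p" "p < y"
  then show "\<exists>d. (gf a has_real_derivative d) (at p) \<and> d < 0"
    using gf_deriv[of p a] assms by (intro exI[of _ "(a - p) / (p * (1 - p))"]) (auto intro!: divide_neg_pos)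
qed

lemma pow_exp:
  assumes "0 < v" "v < 1" "0 < m" "j \<le> m"
  shows "v ^ j * (1 - v) ^ (m - j) = exp (real m * gf (real j / real m) v)"
proof -
  have e: "exp (real i * ln x) = x ^ i" if "0 < x" for i x
    using that by (simp add: exp_of_nat_mult)
  have "real m * gf (real j / real m) v = real j * ln v + real (m - j) * ln (1 - v)"
    using assms by (simp add: gf_def field_simps of_nat_diff)
  also have "exp \<dots> = v ^ j * (1 - v) ^ (m - j)"
    unfolding exp_add using assms e[of v j] e[of "1 - v" "m - j"] by simp
  finally show ?thesis by simp
qed

lemma gf_shift:
  "real m * gf (real j / real m) p = real m * gf g p + (real j - g * real m) * (ln p - ln (1 - p))"
  if "0 < m"
  using that by (simp add: gf_def field_simps)

lemma shift_bound:
  assumes "0 < p" "p < 1" "\<bar>real j - g * real m\<bar> \<le> K0"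
  shows "\<bar>(real j - g * real m) * (ln p - ln (1 - p))\<bar> \<le> K0 * lam p"
proof -
  have "\<bar>(real j - g * real m) * (ln p - ln (1 - p))\<bar> = \<bar>real j - g * real m\<bar> * \<bar>ln p - ln (1 - p)\<bar>"
    by (simp add: abs_mult)
  also have "\<dots> \<le> K0 * lam p"
  proof (rule mult_mono)
    show "\<bar>ln p - ln (1 - p)\<bar> \<le> lam p" unfolding lam_def by (rule abs_triangle_ineq4)
  qed (use assms in auto)
  finally show ?thesis .
qed

lemma ratio_core:
  assumes v: "0 < v" "v < 1" and w: "0 < w" "w < 1" and m: "0 < m" "j \<le> m"
    and K: "\<bar>real j - g * real m\<bar> \<le> K0"
  shows "v ^ j * (1 - v) ^ (m - j) \<le> exp (real m * (gf g v - gf g w) + K0 * (lam v + lam w)) * (w ^ j * (1 - w) ^ (m - j))"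
proof -
  have ev: "v ^ j * (1 - v) ^ (m - j) = exp (real m * gf g v + (real j - g * real m) * (ln v - ln (1 - v)))"
    using pow_exp[OF v m] gf_shift[OF m(1)] by simp
  have ew: "w ^ j * (1 - w) ^ (m - j) = exp (real m * gf g w + (real j - g * real m) * (ln w - ln (1 - w)))"
    using pow_exp[OF w m] gf_shift[OF m(1)] by simp
  have b1: "(real j - g * real m) * (ln v - ln (1 - v)) \<le> K0 * lam v"
    using shift_bound[OF v K] by linarith
  have b2: "- (K0 * lam w) \<le> (real j - g * real m) * (ln w - ln (1 - w))"
    using shift_bound[OF w K] by linarith
  have "real m * gf g v + (real j - g * real m) * (ln v - ln (1 - v)) \<le>
        (real m * (gf g v - gf g w) + K0 * (lam v + lam w)) + (real m * gf g w + (real j - g * real m) * (ln w - ln (1 - w)))"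
    using b1 b2 by (simp add: algebra_simps)
  then have "exp (real m * gf g v + (real j - g * real m) * (ln v - ln (1 - v))) \<le>
        exp (real m * (gf g v - gf g w) + K0 * (lam v + lam w)) * exp (real m * gf g w + (real j - g * real m) * (ln w - ln (1 - w)))"
    by (simp add: exp_add[symmetric])
  then show ?thesis using ev ew by simp
qed

lemma lam_bound:
  assumes "0 < w0" "w0 \<le> w" "w \<le> w1" "w1 < 1"
  shows "lam w \<le> lam w0 + lam w1"
proof -
  have "\<bar>ln w\<bar> \<le> \<bar>ln w0\<bar>" using assms by (simp add: abs_if) 
  moreover have "\<bar>ln (1 - w)\<bar> \<le> \<bar>ln (1 - w1)\<bar>" using assms by (simp add: abs_if)
  ultimately have "lam w \<le> \<bar>ln w0\<bar> + \<bar>ln (1 - w1)\<bar>" unfolding lam_def by linarith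
  then show ?thesis unfolding lam_def
    using abs_ge_zero[of "ln (1 - w0)"] abs_ge_zero[of "ln w1"] by linarith
qed


lemma int_sub:
  fixes f :: "real \<Rightarrow> real"
  assumes "integrable lborel (\<lambda>v. indicator {0<..<1} v * f v)" "A \<subseteq> {0<..<1}" "A \<in> sets borel"
  shows "integrable lborel (\<lambda>v. indicator A v * f v)"
proof -
  have i: "integrable lborel (\<lambda>x. indicator A x *\<^sub>R (indicator {0<..<1} x * f x))"
    by (rule integrable_mult_indicator) (use assms in auto)
  have eq: "(\<lambda>x. indicator A x *\<^sub>R (indicator {0<..<1} x * f x)) = (\<lambda>x. indicator A x * f x)"
    using assms(2) by (auto simp: indicator_def fun_eq_iff)
  from i show ?thesis unfolding eq .
qed

context two begin

lemma part_bound: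
  fixes n k :: nat and g K0 G0 pstar w0 w1 :: real and P :: "real set"
  assumes k: "1 \<le> k" "k \<le> n" and n2: "2 \<le> n"
    and P: "P \<subseteq> {0<..<1}" "P \<in> sets borel"
    and mono: "\<forall>v\<in>P. v^(k-1) * (1-v)^(n-k) \<le> pstar^(k-1) * (1-pstar)^(n-k)"
    and ps: "0 < pstar" "pstar < 1"
    and I: "0 < w0" "w0 < w1" "w1 < 1"
    and G: "\<forall>w\<in>{w0..w1}. G0 \<le> gf g w"
    and K: "\<bar>real (k-1) - g * real (n-1)\<bar> \<le> K0"
    and HI: "0 < (LBINT v. indicator {w0..w1} v * h v)"
  shows "(LBINT v. indicator P v * (h v * bdens n k v)) \<le>
     exp (gf g pstar - G0) ^ (n-1) * (exp (K0 * (lam pstar + (lam w0 + lam w1))) *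
       ((LBINT v. indicator {0<..<1} v * h v) / (LBINT v. indicator {w0..w1} v * h v))) * Wr n k"
proof -
  define c where "c = real n * real ((n-1) choose (k-1))"
  define Bmax where "Bmax = c * (pstar^(k-1) * (1-pstar)^(n-k))"
  define E where "E = exp (K0 * (lam pstar + (lam w0 + lam w1)))"
  define T where "T = exp (gf g pstar - G0) ^ (n-1) * E"
  define H where "H = (LBINT v. indicator {0<..<1} v * h v)"
  define HIv where "HIv = (LBINT v. indicator {w0..w1} v * h v)"
  have c0: "0 \<le> c" by (simp add: c_def)
  have Bm0: "0 \<le> Bmax" unfolding Bmax_def using ps c0 by simp
  have K0: "0 \<le> K0" using K by linarith
  have bd: "bdens n k v = c * (v^(k-1) * (1-v)^(n-k))" for v by (simp add: bdens_def c_def)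
  have Isub: "{w0..w1} \<subseteq> {0<..<1}" using I by auto
  have iH: "integrable lborel (\<lambda>v. indicator {0<..<1} v * h v)" by (rule h_int)
  have iI: "integrable lborel (\<lambda>v. indicator {w0..w1} v * h v)" by (rule int_sub[OF h_int Isub]) simp
  have iHb: "integrable lborel (\<lambda>v. indicator {0<..<1} v * (h v * bdens n k v))" by (rule hb_int[OF k])
  have iIb: "integrable lborel (\<lambda>v. indicator {w0..w1} v * (h v * bdens n k v))" by (rule int_sub[OF iHb Isub]) simp
  have iPb: "integrable lborel (\<lambda>v. indicator P v * (h v * bdens n k v))" by (rule int_sub[OF iHb P])
  have s1: "(LBINT v. indicator P v * (h v * bdens n k v)) \<le> (LBINT v. Bmax * (indicator {0<..<1} v * h v))"
  proof (rule integral_mono[OF iPb integrable_mult_right[OF iH]])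
    fix v
    show "indicator P v * (h v * bdens n k v) \<le> Bmax * (indicator {0<..<1} v * h v)"
    proof (cases "v \<in> P")
      case True
      have "bdens n k v \<le> Bmax" unfolding bd Bmax_def using mono True c0 by (simp add: mult_left_mono)
      then have "h v * bdens n k v \<le> h v * Bmax" by (rule mult_left_mono) (rule h_nonneg)
      then show ?thesis using True P(1) by (auto simp: indicator_def mult.commute)
    next
      case False
      then show ?thesis using Bm0 h_nonneg[of v] by (simp add: indicator_def)
    qed
  qed
  have s1': "(LBINT v. Bmax * (indicator {0<..<1} v * h v)) = Bmax * H" by (simp add: H_def)
  have s2: "Bmax \<le> T * bdens n k w" if w: "w \<in> {w0..w1}" for w
  proof -
    have w01: "0 < w" "w < 1" using w I by auto
    have m: "0 < n - 1" "k - 1 \<le> n - 1" using k n2 by auto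
    have nk: "n - 1 - (k - 1) = n - k" using k by simp
    have r: "pstar^(k-1) * (1-pstar)^(n-k) \<le> exp (real (n-1) * (gf g pstar - gf g w) + K0 * (lam pstar + lam w)) * (w^(k-1) * (1-w)^(n-k))"
      using ratio_core[OF ps w01 m K] unfolding nk .
    have "real (n-1) * (gf g pstar - gf g w) + K0 * (lam pstar + lam w) \<le>
          real (n-1) * (gf g pstar - G0) + K0 * (lam pstar + (lam w0 + lam w1))"
    proof (rule add_mono)
      show "real (n-1) * (gf g pstar - gf g w) \<le> real (n-1) * (gf g pstar - G0)"
        using G w by (intro mult_left_mono) auto
      show "K0 * (lam pstar + lam w) \<le> K0 * (lam pstar + (lam w0 + lam w1))"
        using lam_bound[of w0 w w1] w I K0 by (intro mult_left_mono) auto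
    qed
    then have "exp (real (n-1) * (gf g pstar - gf g w) + K0 * (lam pstar + lam w)) \<le>
       exp (real (n-1) * (gf g pstar - G0) + K0 * (lam pstar + (lam w0 + lam w1)))"
      by (subst exp_le_cancel_iff)
    also have "\<dots> = T"
      unfolding T_def E_def exp_add exp_of_nat_mult ..
    finally have "exp (real (n-1) * (gf g pstar - gf g w) + K0 * (lam pstar + lam w)) \<le> T" .
    with r have "pstar^(k-1) * (1-pstar)^(n-k) \<le> T * (w^(k-1) * (1-w)^(n-k))"
      by (meson dual_order.trans mult_right_mono w01 less_imp_le zero_le_mult_iff zero_le_power diff_ge_0_iff_ge)
    then have "c * (pstar^(k-1) * (1-pstar)^(n-k)) \<le> c * (T * (w^(k-1) * (1-w)^(n-k)))"
      by (rule mult_left_mono) (rule c0)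
    then show ?thesis unfolding Bmax_def bd by (simp add: algebra_simps)
  qed
  have s3: "Bmax * HIv \<le> T * Wr n k"
  proof -
    have "Bmax * HIv = (LBINT v. Bmax * (indicator {w0..w1} v * h v))" by (simp add: HIv_def)
    also have "\<dots> \<le> (LBINT v. T * (indicator {w0..w1} v * (h v * bdens n k v)))"
    proof (rule integral_mono[OF integrable_mult_right[OF iI] integrable_mult_right[OF iIb]])
      fix v
      show "Bmax * (indicator {w0..w1} v * h v) \<le> T * (indicator {w0..w1} v * (h v * bdens n k v))"
      proof (cases "v \<in> {w0..w1}")
        case True
        have "h v * Bmax \<le> h v * (T * bdens n k v)" by (rule mult_left_mono[OF s2[OF True] h_nonneg])
        then show ?thesis using True by (simp add: algebra_simps)
      qed simp
    qed
    also have "\<dots> = T * (LBINT v. indicator {w0..w1} v * (h v * bdens n k v))" by simp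
    also have "\<dots> \<le> T * Wr n k"
    proof (rule mult_left_mono)
      show "(LBINT v. indicator {w0..w1} v * (h v * bdens n k v)) \<le> Wr n k"
        unfolding Wr_def
      proof (rule integral_mono[OF iIb iHb])
        fix v show "indicator {w0..w1} v * (h v * bdens n k v) \<le> indicator {0<..<1} v * (h v * bdens n k v)"
          using Isub bdens_nonneg[OF k, of v] h_nonneg[of v] by (auto simp: indicator_def)
      qed
      show "0 \<le> T" unfolding T_def E_def by simp
    qed
    finally show ?thesis .
  qed
  have HI0: "0 < HIv" using HI by (simp add: HIv_def)
  have H0: "0 \<le> H" unfolding H_def by (rule integral_nonneg_AE) (auto simp: indicator_def h_nonneg)
  have "Bmax * H = (Bmax * HIv) * (H / HIv)" using HI0 by simp
  also have "\<dots> \<le> (T * Wr n k) * (H / HIv)" by (rule mult_right_mono[OF s3]) (use H0 HI0 in simp)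
  finally have "Bmax * H \<le> T * Wr n k * (H / HIv)" .
  with s1 s1' have "(LBINT v. indicator P v * (h v * bdens n k v)) \<le> T * Wr n k * (H / HIv)" by linarith
  then show ?thesis unfolding T_def E_def H_def HIv_def by (simp add: algebra_simps)
qed

end


context ccdf begin

lemma Fe_ereal[simp]: "Fe F (ereal r) = F r" by (simp add: Fe_def)
lemma Fe_minf[simp]: "Fe F (-\<infinity>) = 0" by (simp add: Fe_def)
lemma Fe_inf[simp]: "Fe F \<infinity> = 1" by (simp add: Fe_def)

lemma Fe_strict: assumes "x < y" shows "Fe F x < Fe F y"
  using assms by (cases x; cases y) (auto simp: less pos lt1)

lemma Fe_mono: assumes "x \<le> y" shows "Fe F x \<le> Fe F y"
proof (cases "x = y")
  case False
  then have "x < y" using assms by simp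
  then show ?thesis using Fe_strict by (simp add: less_imp_le)
qed simp

lemma Fe_nonneg: "0 \<le> Fe F x"
  by (cases x) (auto intro: less_imp_le pos)
lemma Fe_le1: "Fe F x \<le> 1"
  by (cases x) (auto intro: less_imp_le lt1)

lemma qinv_e_char:
  assumes "g \<in> {0..1}"
  shows "(ereal y < qinv_e F g \<longleftrightarrow> F y < g) \<and> (qinv_e F g < ereal y \<longleftrightarrow> g < F y)"
proof -
  consider "g = 0" | "g = 1" | "0 < g" "g < 1" using assms by fastforce
  then show ?thesis
  proof cases
    case 1
    have "qinv_e F g = -\<infinity>"
      unfolding qinv_e_def 1
    proof (rule ereal_bot)
      fix B show "Inf (ereal ` {x. 0 \<le> F x}) \<le> ereal B"
        by (rule Inf_lower) (use pos[of B] in auto)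
    qed
    then show ?thesis using 1 pos[of y] by simp
  next
    case 2
    have "{x. g \<le> F x} = {}" using 2 lt1 by (auto simp: not_le)
    then have "qinv_e F g = \<infinity>" unfolding qinv_e_def by (simp add: top_ereal_def)
    then show ?thesis using 2 lt1[of y] by simp
  next
    case 3
    define q where "q = qinv F g"
    have Fq: "F q = g" using F_qinv[OF 3] q_def by simp
    have "{x. g \<le> F x} = {q..}" using Fq le_iff by auto
    moreover have "Inf (ereal ` {q..}) = ereal q"
      by (rule antisym) (auto intro: Inf_lower Inf_greatest)
    ultimately have "qinv_e F g = ereal q" unfolding qinv_e_def by simp
    then show ?thesis using Fq less_iff by auto
  qed
qed

end

locale main = two FX FY for FX FY +
  fixes g :: real
  assumes gam: "g \<in> {0..1}"
    and hc: "B0 FX FY \<inter> {x. ereal x < qinv_e FX g} \<noteq> {} \<Longrightarrow> c_pt FX FY g < a_pt FX FY g"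
    and hd: "B0 FX FY \<inter> {x. qinv_e FX g < ereal x} \<noteq> {} \<Longrightarrow> b_pt FX FY g < d_pt FX FY g"
begin

definition "L = {x. FX x < FY x \<and> FX x < g}"
definition "U = {x. FX x < FY x \<and> g < FX x}"
definition "AL = {x. FX x \<noteq> FY x \<and> FX x < g}"
definition "AU = {x. FX x \<noteq> FY x \<and> g < FX x}"

lemma qe: "ereal y < qinv_e FX g \<longleftrightarrow> FX y < g" "qinv_e FX g < ereal y \<longleftrightarrow> g < FX y"
  using X.qinv_e_char[OF gam] by auto

lemma c_eq: "c_pt FX FY g = Sup (ereal ` L)"
  unfolding c_pt_def L_def B0_def qe by (rule arg_cong[where f=Sup]) auto
lemma a_eq: "a_pt FX FY g = Sup (ereal ` AL)"
  unfolding a_pt_def AL_def B2_def qe by (rule arg_cong[where f=Sup]) auto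
lemma d_eq: "d_pt FX FY g = Inf (ereal ` U)"
  unfolding d_pt_def U_def B0_def qe by (rule arg_cong[where f=Inf]) auto
lemma b_eq: "b_pt FX FY g = Inf (ereal ` AU)"
  unfolding b_pt_def AU_def B2_def qe by (rule arg_cong[where f=Inf]) auto

lemma hc': "L \<noteq> {} \<Longrightarrow> Sup (ereal ` L) < Sup (ereal ` AL)"
  using hc unfolding c_eq a_eq by (auto simp: L_def B0_def qe)
lemma hd': "U \<noteq> {} \<Longrightarrow> Inf (ereal ` AU) < Inf (ereal ` U)"
  using hd unfolding b_eq d_eq by (auto simp: U_def B0_def qe)

definition "pc = Fe FX (Sup (ereal ` L))"
definition "pa = Fe FX (Sup (ereal ` AL))"
definition "pd = Fe FX (Inf (ereal ` U))"
definition "pb = Fe FX (Inf (ereal ` AU))"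

lemma open_B2: "open {x. FX x \<noteq> FY x}"
  by (rule open_Collect_neq) (use X.cont Y.cont in \<open>auto simp: continuous_on_eq_continuous_at\<close>)
lemma open_B0: "open {x. FX x < FY x}"
  by (rule open_Collect_less) (use X.cont Y.cont in \<open>auto simp: continuous_on_eq_continuous_at\<close>)

lemma L_le_pc: "x \<in> L \<Longrightarrow> FX x \<le> pc"
  unfolding pc_def using X.Fe_mono[of "ereal x" "Sup (ereal ` L)"] by (simp add: Sup_upper)
lemma U_ge_pd: "x \<in> U \<Longrightarrow> pd \<le> FX x"
  unfolding pd_def using X.Fe_mono[of "Inf (ereal ` U)" "ereal x"] by (simp add: Inf_lower)

lemma pc_pos: "L \<noteq> {} \<Longrightarrow> 0 < pc"
proof -
  assume "L \<noteq> {}" then obtain x where "x \<in> L" by blast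
  then show ?thesis using L_le_pc[of x] X.pos[of x] by linarith
qed
lemma pd_lt1: "U \<noteq> {} \<Longrightarrow> pd < 1"
proof -
  assume "U \<noteq> {}" then obtain x where "x \<in> U" by blast
  then show ?thesis using U_ge_pd[of x] X.lt1[of x] by linarith
qed
lemma pc_pa: "L \<noteq> {} \<Longrightarrow> pc < pa"
  unfolding pc_def pa_def using hc' X.Fe_strict by blast
lemma pb_pd: "U \<noteq> {} \<Longrightarrow> pb < pd"
  unfolding pb_def pd_def using hd' X.Fe_strict by blast
lemma pa_le: "pa \<le> g"
proof -
  have "Sup (ereal ` AL) \<le> qinv_e FX g"
    by (rule Sup_least) (auto simp: AL_def qe less_imp_le)
  from X.Fe_mono[OF this] have "pa \<le> Fe FX (qinv_e FX g)" by (simp add: pa_def)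
  moreover have "Fe FX (qinv_e FX g) \<le> g"
  proof (cases "qinv_e FX g")
    case (real r)
    then show ?thesis using qe(2)[of r] by simp
  next
    case PInf
    then have "\<And>y. FX y < g" using qe(1) by simp
    then have "1 \<le> g" by (intro tendsto_upperbound[OF X.ltop]) (auto intro: always_eventually less_imp_le)
    then show ?thesis using PInf by simp
  qed (use gam in auto)
  ultimately show ?thesis by simp
qed
lemma pb_ge: "g \<le> pb"
proof -
  have "qinv_e FX g \<le> Inf (ereal ` AU)"
    by (rule Inf_greatest) (auto simp: AU_def qe less_imp_le)
  from X.Fe_mono[OF this] have "Fe FX (qinv_e FX g) \<le> pb" by (simp add: pb_def)
  moreover have "g \<le> Fe FX (qinv_e FX g)"
  proof (cases "qinv_e FX g")
    case (real r)
    then show ?thesis using qe(1)[of r] by simp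
  next
    case MInf
    then have "\<And>y. g < FX y" using qe(2) by simp
    then have "g \<le> 0" by (intro tendsto_lowerbound[OF X.lbot]) (auto intro: always_eventually less_imp_le)
    then show ?thesis using MInf by simp
  qed (use gam in auto)
  ultimately show ?thesis by simp
qed

lemma pos_h: "FX x \<noteq> FY x \<Longrightarrow> 0 < h (FX x)"
proof -
  assume ne: "FX x \<noteq> FY x"
  have "qinv FY (FX x) \<noteq> x"
  proof
    assume a: "qinv FY (FX x) = x"
    have "FY (qinv FY (FX x)) = FX x" by (rule Y.F_qinv[OF X.pos X.lt1])
    then have "FY x = FX x" using a by simp
    with ne show False by simp
  qed
  then show ?thesis by (simp add: h_def)
qed

lemma interval_L:
  assumes L: "L \<noteq> {}" and e: "0 < e" "e < pa - pc"
  shows "\<exists>w0 w1. 0 < w0 \<and> w0 < w1 \<and> w1 < 1 \<and> pa - e \<le> w0 \<and> w1 \<le> pa \<and> (\<forall>w\<in>{w0..w1}. 0 < h w)"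
proof -
  have pe: "0 < pa - e" "pa - e < 1" using pc_pos[OF L] e pa_le gam by auto
  define y where "y = qinv FX (pa - e)"
  have Fy: "FX y = pa - e" using X.F_qinv[OF pe] y_def by simp
  have "ereal y < Sup (ereal ` AL)"
  proof (rule ccontr)
    assume "\<not> ereal y < Sup (ereal ` AL)"
    then have "Sup (ereal ` AL) \<le> ereal y" by simp
    from X.Fe_mono[OF this] have "pa \<le> FX y" by (simp add: pa_def)
    with Fy e show False by simp
  qed
  then obtain x0 where x0: "x0 \<in> AL" "ereal y < ereal x0" by (auto simp: less_Sup_iff)
  have x0a: "FX x0 \<le> pa" unfolding pa_def using X.Fe_mono[of "ereal x0" "Sup (ereal ` AL)"] x0(1)
    by (simp add: Sup_upper)
  obtain \<delta> where d: "0 < \<delta>" "\<And>x. dist x x0 < \<delta> \<Longrightarrow> FX x \<noteq> FY x"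
    using open_B2 x0(1) unfolding open_dist AL_def by blast
  define x1 where "x1 = max (x0 - \<delta>/2) ((x0 + y)/2)"
  have yx0: "y < x0" using x0(2) by simp
  have x1: "y < x1" "x1 < x0" "x0 - x1 < \<delta>"
  proof -
    have "y < (x0 + y)/2" using yx0 by (simp add: field_simps)
    moreover have "(x0 + y)/2 < x0" using yx0 by (simp add: field_simps)
    moreover have "x0 - \<delta>/2 < x0" using d(1) by linarith
    moreover have "x0 - (x0 - \<delta>/2) < \<delta>" using d(1) by linarith
    ultimately show "y < x1" "x1 < x0" "x0 - x1 < \<delta>" unfolding x1_def by (simp_all add: less_max_iff_disj max_less_iff_conj)
  qed
  show ?thesis
  proof (intro exI conjI ballI)
    show "0 < FX x1" "FX x0 < 1" by (rule X.pos, rule X.lt1)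
    show "FX x1 < FX x0" using x1 X.less by simp
    show "pa - e \<le> FX x1" using x1 X.less[of y x1] Fy by simp
    show "FX x0 \<le> pa" by (rule x0a)
    fix w assume w: "w \<in> {FX x1..FX x0}"
    then have w01: "0 < w" "w < 1" using X.pos[of x1] X.lt1[of x0] by auto
    define x where "x = qinv FX w"
    have Fx: "FX x = w" using X.F_qinv[OF w01] x_def by simp
    have "x1 \<le> x" "x \<le> x0" using w Fx X.le_iff by auto
    then have "dist x x0 < \<delta>" using x1 by (simp add: dist_real_def)
    then have "FX x \<noteq> FY x" by (rule d(2))
    from pos_h[OF this] show "0 < h w" using Fx by simp
  qed
qed

lemma interval_U:
  assumes U: "U \<noteq> {}" and e: "0 < e" "e < pd - pb"
  shows "\<exists>w0 w1. 0 < w0 \<and> w0 < w1 \<and> w1 < 1 \<and> pb \<le> w0 \<and> w1 \<le> pb + e \<and> (\<forall>w\<in>{w0..w1}. 0 < h w)"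
proof -
  have pe: "0 < pb + e" "pb + e < 1" using pd_lt1[OF U] e pb_ge gam by auto
  define y where "y = qinv FX (pb + e)"
  have Fy: "FX y = pb + e" using X.F_qinv[OF pe] y_def by simp
  have "Inf (ereal ` AU) < ereal y"
  proof (rule ccontr)
    assume "\<not> Inf (ereal ` AU) < ereal y"
    then have "ereal y \<le> Inf (ereal ` AU)" by simp
    from X.Fe_mono[OF this] have "FX y \<le> pb" by (simp add: pb_def)
    with Fy e show False by simp
  qed
  then obtain x0 where x0: "x0 \<in> AU" "ereal x0 < ereal y" by (auto simp: Inf_less_iff)
  have x0b: "pb \<le> FX x0" unfolding pb_def using X.Fe_mono[of "Inf (ereal ` AU)" "ereal x0"] x0(1)
    by (simp add: Inf_lower)
  obtain \<delta> where d: "0 < \<delta>" "\<And>x. dist x x0 < \<delta> \<Longrightarrow> FX x \<noteq> FY x"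
    using open_B2 x0(1) unfolding open_dist AU_def by blast
  define x1 where "x1 = min (x0 + \<delta>/2) ((x0 + y)/2)"
  have yx0: "x0 < y" using x0(2) by simp
  have x1: "x1 < y" "x0 < x1" "x1 - x0 < \<delta>"
  proof -
    have "(x0 + y)/2 < y" using yx0 by (simp add: field_simps)
    moreover have "x0 < (x0 + y)/2" using yx0 by (simp add: field_simps)
    moreover have "x0 < x0 + \<delta>/2" using d(1) by linarith
    moreover have "(x0 + \<delta>/2) - x0 < \<delta>" using d(1) by linarith
    ultimately show "x1 < y" "x0 < x1" "x1 - x0 < \<delta>" unfolding x1_def by (simp_all add: min_less_iff_disj min_def)
  qed
  show ?thesis
  proof (intro exI conjI ballI)
    show "0 < FX x0" "FX x1 < 1" by (rule X.pos, rule X.lt1)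
    show "FX x0 < FX x1" using x1 X.less by simp
    show "FX x1 \<le> pb + e" using x1 X.less[of x1 y] Fy by simp
    show "pb \<le> FX x0" by (rule x0b)
    fix w assume w: "w \<in> {FX x0..FX x1}"
    then have w01: "0 < w" "w < 1" using X.pos[of x0] X.lt1[of x1] by auto
    define x where "x = qinv FX w"
    have Fx: "FX x = w" using X.F_qinv[OF w01] x_def by simp
    have "x0 \<le> x" "x \<le> x1" using w Fx X.le_iff by auto
    then have "dist x x0 < \<delta>" using x1 by (simp add: dist_real_def)
    then have "FX x \<noteq> FY x" by (rule d(2))
    from pos_h[OF this] show "0 < h w" using Fx by simp
  qed
qed

lemma Rsplit:
  assumes v: "v \<in> Rv"
  shows "(L \<noteq> {} \<and> v \<le> pc) \<or> (U \<noteq> {} \<and> pd \<le> v)"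
proof -
  have v01: "0 < v" "v < 1" using v by (auto simp: Rv_def)
  define x where "x = qinv FX v"
  have Fx: "FX x = v" using X.F_qinv[OF v01] x_def by simp
  have "qinv FY v < x" using v by (simp add: Rv_def x_def)
  then have "v < FY x"
  proof -
    assume qx: "qinv FY v < x"
    have q: "FY (qinv FY v) = v" by (rule Y.F_qinv[OF v01])
    show "v < FY x"
    proof (rule ccontr)
      assume "\<not> v < FY x"
      then have "FY x \<le> FY (qinv FY v)" using q by simp
      then have "x \<le> qinv FY v" using Y.le_iff by simp
      with qx show False by simp
    qed
  qed
  then have B: "FX x < FY x" using Fx by simp
  consider "FX x < g" | "g < FX x" | "FX x = g" by linarith
  then show ?thesis
  proof cases
    case 1
    then have "x \<in> L" using B by (simp add: L_def)
    then show ?thesis using L_le_pc Fx by blast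
  next
    case 2
    then have "x \<in> U" using B by (simp add: U_def)
    then show ?thesis using U_ge_pd Fx by blast
  next
    case 3
    obtain \<delta> where d: "0 < \<delta>" "\<And>y. dist y x < \<delta> \<Longrightarrow> FX y < FY y"
      using open_B0 B unfolding open_dist by blast
    have "dist (x - \<delta>/2) x < \<delta>" using d(1) by (simp add: dist_real_def)
    then have "FX (x - \<delta>/2) < FY (x - \<delta>/2)" by (rule d(2))
    moreover have "FX (x - \<delta>/2) < g" using X.less[of "x - \<delta>/2" x] d(1) 3 by simp
    ultimately have xL: "x - \<delta>/2 \<in> L" by (simp add: L_def)
    then have L: "L \<noteq> {}" by blast
    have ca: "Sup (ereal ` L) < Sup (ereal ` AL)" by (rule hc'[OF L])
    have "Sup (ereal ` AL) \<le> ereal x"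
    proof (rule Sup_least)
      fix z assume "z \<in> ereal ` AL"
      then obtain y where y: "y \<in> AL" "z = ereal y" by blast
      then have "FX y < FX x" using 3 by (simp add: AL_def)
      then have "y < x" using X.less_iff by simp
      then show "z \<le> ereal x" using y(2) by simp
    qed
    with ca have cx: "Sup (ereal ` L) < ereal x" by simp
    have cm: "ereal (x - \<delta>/2) \<le> Sup (ereal ` L)" using xL by (simp add: Sup_upper)
    then obtain cr where cr: "Sup (ereal ` L) = ereal cr" using cx by (cases "Sup (ereal ` L)") auto
    define t where "t = max (x - \<delta>/2) ((cr + x)/2)"
    have crx: "cr < x" using cx cr by simp
    have t1: "t < x" using crx d(1) unfolding t_def by (simp add: field_simps)
    have t2: "x - \<delta>/2 \<le> t" unfolding t_def by simp
    have "dist t x < \<delta>" using t1 t2 d(1) by (simp add: dist_real_def)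
    then have "FX t < FY t" by (rule d(2))
    moreover have "FX t < g" using X.less[OF t1] 3 by simp
    ultimately have "t \<in> L" by (simp add: L_def)
    then have "ereal t \<le> Sup (ereal ` L)" by (simp add: Sup_upper)
    then have "ereal t \<le> ereal cr" using cr by simp
    moreover have "cr < t"
    proof -
      have "cr < (cr + x)/2" using crx by (simp add: field_simps)
      then show ?thesis unfolding t_def by (simp add: less_max_iff_disj)
    qed
    ultimately show ?thesis by simp
  qed
qed

end


context main begin

lemma pc_empty: "L = {} \<Longrightarrow> pc = 0"
  by (simp add: pc_def bot_ereal_def)
lemma pd_empty: "U = {} \<Longrightarrow> pd = 1"
  by (simp add: pd_def top_ereal_def)
lemma g0_L: "g = 0 \<Longrightarrow> L = {}"
  unfolding L_def using X.pos by (metis (mono_tags, lifting) empty_Collect_eq not_less_iff_gr_or_eq)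
lemma g1_U: "g = 1 \<Longrightarrow> U = {}"
  unfolding U_def using X.lt1 by (metis (mono_tags, lifting) empty_Collect_eq not_less_iff_gr_or_eq)

definition "e0 = min (if L \<noteq> {} then pa - pc else 1) (if U \<noteq> {} then pd - pb else 1)"
definition "tL e = exp (gf g pc - gf g (pa - e))"
definition "tU e = exp (gf g pd - gf g (pb + e))"

lemma e0_pos: "0 < e0"
  unfolding e0_def using pc_pa pb_pd by auto

lemma z_eq: "z_rate FX FY g e =
   (if g = 0 then (1 - pd) / (1 - pb - e)
    else if g = 1 then pc / (pa - e)
    else max ((pc / (pa - e)) powr g * ((1 - pc) / (1 - pa + e)) powr (1 - g))
             ((pd / (pb + e)) powr g * ((1 - pd) / (1 - pb - e)) powr (1 - g)))"
  unfolding z_rate_def Let_def pa_def pb_def pc_def pd_def a_eq b_eq c_eq d_eq ..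

lemma powr_form:
  assumes "0 < p" "p < 1" "0 < q" "q < 1"
  shows "(p / q) powr g * ((1 - p) / (1 - q)) powr (1 - g) = exp (gf g p - gf g q)"
proof -
  have "(p / q) powr g * ((1 - p) / (1 - q)) powr (1 - g) =
        exp (g * ln (p / q)) * exp ((1 - g) * ln ((1 - p) / (1 - q)))"
    using assms by (simp add: powr_def)
  also have "\<dots> = exp (gf g p - gf g q)"
    using assms by (simp add: exp_add[symmetric] ln_div gf_def algebra_simps)
  finally show ?thesis .
qed

lemma tL_props:
  assumes L: "L \<noteq> {}" and e: "0 < e" "e < e0"
  shows "0 < pc" "pc < pa - e" "pa - e \<le> g" "pa - e < 1" "0 < tL e" "tL e < 1"
proof -
  show p1: "0 < pc" by (rule pc_pos[OF L])
  have "e < pa - pc" using e L unfolding e0_def by (auto split: if_splits)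
  then show p2: "pc < pa - e" by simp
  show p3: "pa - e \<le> g" using pa_le e by simp
  show p4: "pa - e < 1" using pa_le gam e by simp
  show "0 < tL e" by (simp add: tL_def)
  have "gf g pc < gf g (pa - e)" by (rule gf_up_strict[OF p1 p2 p3 p4])
  then show "tL e < 1" by (simp add: tL_def)
qed

lemma tU_props:
  assumes U: "U \<noteq> {}" and e: "0 < e" "e < e0"
  shows "pd < 1" "pb + e < pd" "g \<le> pb + e" "0 < pb + e" "0 < tU e" "tU e < 1"
proof -
  show p1: "pd < 1" by (rule pd_lt1[OF U])
  have "e < pd - pb" using e U unfolding e0_def by (auto split: if_splits)
  then show p2: "pb + e < pd" by simp
  show p3: "g \<le> pb + e" using pb_ge e by simp
  show p4: "0 < pb + e" using pb_ge gam e by simp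
  show "0 < tU e" by (simp add: tU_def)
  have "gf g pd < gf g (pb + e)" by (rule gf_down_strict[OF p4 p2 p3 p1])
  then show "tU e < 1" by (simp add: tU_def)
qed

lemma z_facts:
  assumes e: "0 < e" "e < e0"
  shows "0 \<le> z_rate FX FY g e" "z_rate FX FY g e < 1"
    "L \<noteq> {} \<Longrightarrow> tL e \<le> z_rate FX FY g e" "U \<noteq> {} \<Longrightarrow> tU e \<le> z_rate FX FY g e"
proof -
  define T1 where "T1 = (pc / (pa - e)) powr g * ((1 - pc) / (1 - pa + e)) powr (1 - g)"
  define T2 where "T2 = (pd / (pb + e)) powr g * ((1 - pd) / (1 - pb - e)) powr (1 - g)"
  have T1: "0 \<le> T1 \<and> T1 < 1 \<and> (L \<noteq> {} \<longrightarrow> T1 = tL e)" if "0 < g" "g < 1"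
  proof (cases "L = {}")
    case True then show ?thesis using that by (simp add: T1_def pc_empty)
  next
    case False
    note p = tL_props[OF False e]
    have "T1 = tL e" unfolding T1_def tL_def
      using powr_form[of pc "pa - e"] p pc_pa[OF False] by (simp add: algebra_simps)
    then show ?thesis using p by simp
  qed
  have T2: "0 \<le> T2 \<and> T2 < 1 \<and> (U \<noteq> {} \<longrightarrow> T2 = tU e)" if "0 < g" "g < 1"
  proof (cases "U = {}")
    case True then show ?thesis using that by (simp add: T2_def pd_empty)
  next
    case False
    note p = tU_props[OF False e]
    have "T2 = tU e" unfolding T2_def tU_def
      using powr_form[of pd "pb + e"] p by (simp add: algebra_simps)
    then show ?thesis using p by simp
  qed
  have all: "0 \<le> z_rate FX FY g e \<and> z_rate FX FY g e < 1 \<and> (L \<noteq> {} \<longrightarrow> tL e \<le> z_rate FX FY g e)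
      \<and> (U \<noteq> {} \<longrightarrow> tU e \<le> z_rate FX FY g e)"
  proof -
    consider "g = 0" | "g = 1" | "0 < g" "g < 1" using gam by fastforce
    then show ?thesis
    proof cases
      case 1
      have L: "L = {}" by (rule g0_L[OF 1])
      have zv: "z_rate FX FY g e = (1 - pd) / (1 - pb - e)" unfolding z_eq using 1 by simp
      show ?thesis
      proof (cases "U = {}")
        case True then show ?thesis using zv L by (simp add: pd_empty)
      next
        case False
        note p = tU_props[OF False e]
        have "tU e = exp (ln (1 - pd) - ln (1 - (pb + e)))" unfolding tU_def gf_def using 1 by simp
        also have "\<dots> = (1 - pd) / (1 - pb - e)" using p by (simp add: exp_diff)
        finally show ?thesis using zv L p by simp
      qed
    next
      case 2
      have U: "U = {}" by (rule g1_U[OF 2])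
      have zv: "z_rate FX FY g e = pc / (pa - e)" unfolding z_eq using 2 by simp
      show ?thesis
      proof (cases "L = {}")
        case True then show ?thesis using zv U by (simp add: pc_empty)
      next
        case False
        note p = tL_props[OF False e]
        have "tL e = exp (ln pc - ln (pa - e))" unfolding tL_def gf_def using 2 by simp
        also have "\<dots> = pc / (pa - e)" using p by (simp add: exp_diff)
        finally show ?thesis using zv U p by simp
      qed
    next
      case 3
      have "z_rate FX FY g e = max T1 T2" using 3 by (simp add: z_eq T1_def T2_def)
      then show ?thesis using T1[OF 3] T2[OF 3] by auto
    qed
  qed
  then show "0 \<le> z_rate FX FY g e" "z_rate FX FY g e < 1"
    "L \<noteq> {} \<Longrightarrow> tL e \<le> z_rate FX FY g e" "U \<noteq> {} \<Longrightarrow> tU e \<le> z_rate FX FY g e" by auto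
qed

end


lemma k_bounds:
  assumes "gs \<in> {0..1}" "1 \<le> n"
  shows "1 \<le> 1 + nat \<lfloor>real (n-1) * gs\<rfloor>" "1 + nat \<lfloor>real (n-1) * gs\<rfloor> \<le> n"
proof -
  show "1 \<le> 1 + nat \<lfloor>real (n-1) * gs\<rfloor>" by simp
  have "real (n-1) * gs \<le> real (n-1)" using assms by (simp add: mult_left_le)
  then have "\<lfloor>real (n-1) * gs\<rfloor> \<le> int (n-1)" by (metis floor_mono floor_of_nat)
  then have "nat \<lfloor>real (n-1) * gs\<rfloor> \<le> n - 1" by (simp add: nat_le_iff)
  then show "1 + nat \<lfloor>real (n-1) * gs\<rfloor> \<le> n" using assms by linarith
qed

lemma K_bound:
  assumes gs: "gs \<in> {0..1}" and n: "1 \<le> n" and cK: "0 < cK"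
    and b: "\<bar>gs - g\<bar> \<le> cK * \<bar>1 / real n\<bar>"
  shows "\<bar>real (nat \<lfloor>real (n-1) * gs\<rfloor>) - g * real (n-1)\<bar> \<le> 1 + cK"
proof -
  define m where "m = real (n-1)"
  define x where "x = m * gs"
  have x0: "0 \<le> x" using gs by (simp add: x_def m_def)
  have j: "real (nat \<lfloor>x\<rfloor>) = real_of_int \<lfloor>x\<rfloor>" using x0 by simp
  have j1: "real_of_int \<lfloor>x\<rfloor> \<le> x" "x < real_of_int \<lfloor>x\<rfloor> + 1" by linarith+
  have mn: "m \<le> real n" "0 \<le> m" using n by (auto simp: m_def)
  have "x - g * m = m * (gs - g)" by (simp add: x_def algebra_simps)
  then have "\<bar>x - g * m\<bar> = m * \<bar>gs - g\<bar>" using mn by (simp add: abs_mult)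
  also have "\<dots> \<le> m * (cK * (1 / real n))" using b mn by (intro mult_left_mono) auto
  also have "\<dots> \<le> cK"
  proof -
    have "m / real n \<le> 1" using mn n by (simp add: divide_le_eq)
    then have "cK * (m / real n) \<le> cK * 1" using cK by (intro mult_left_mono) auto
    then show ?thesis by (simp add: algebra_simps)
  qed
  finally have "\<bar>x - g * m\<bar> \<le> cK" .
  then show ?thesis using j j1 unfolding x_def[symmetric] m_def[symmetric] by linarith
qed

context main begin

lemma HI_pos:
  assumes "0 < w0" "w0 < w1" "w1 < 1" "\<forall>w\<in>{w0..w1}. 0 < h w"
  shows "0 < (LBINT v. indicator {w0..w1} v * h v)"
proof -
  have sub: "{w0..w1} \<subseteq> {0<..<1}" using assms by auto
  have int: "integrable lborel (\<lambda>v. indicator {w0..w1} v * h v)" by (rule int_sub[OF h_int sub]) simp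
  have nn: "AE v in lborel. 0 \<le> indicator {w0..w1} v * h v" by (rule AE_I2) (simp add: h_nonneg)
  have ge: "0 \<le> (LBINT v. indicator {w0..w1} v * h v)" by (rule integral_nonneg_AE[OF nn])
  show ?thesis
  proof (rule ccontr)
    assume "\<not> ?thesis"
    then have "(LBINT v. indicator {w0..w1} v * h v) = 0" using ge by simp
    then have "AE v in lborel. indicator {w0..w1} v * h v = 0"
      using integral_nonneg_eq_0_iff_AE[OF int nn] by simp
    then have "AE v in lborel. v \<notin> {w0..w1}"
    proof (rule AE_mp)
      show "AE v in lborel. indicator {w0..w1} v * h v = 0 \<longrightarrow> v \<notin> {w0..w1}"
      proof (rule AE_I2, rule impI)
        fix v assume z: "indicator {w0..w1} v * h v = 0"
        show "v \<notin> {w0..w1}"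
        proof
          assume vin: "v \<in> {w0..w1}"
          then have "0 < h v" using assms(4) by blast
          with z vin show False by (simp add: indicator_def)
        qed
      qed
    qed
    then have "{w0..w1} \<in> null_sets lborel" by (subst AE_iff_null_sets) auto
    then have "emeasure lborel {w0..w1} = 0" by auto
    then show False using assms by simp
  qed
qed

definition "CL K0 w0 w1 = (if L \<noteq> {} then exp (K0 * (lam pc + (lam w0 + lam w1))) *
   ((LBINT v. indicator {0<..<1} v * h v) / (LBINT v. indicator {w0..w1} v * h v)) else 0)"
definition "CU K0 w0 w1 = (if U \<noteq> {} then exp (K0 * (lam pd + (lam w0 + lam w1))) *
   ((LBINT v. indicator {0<..<1} v * h v) / (LBINT v. indicator {w0..w1} v * h v)) else 0)"

lemma H_nonneg: "0 \<le> (LBINT v. indicator {0<..<1} v * h v)"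
  by (rule integral_nonneg_AE) (auto simp: h_nonneg)

lemma CL_nonneg:
  assumes "L \<noteq> {} \<Longrightarrow> 0 < (LBINT v. indicator {w0..w1} v * h v)"
  shows "0 \<le> CL K0 w0 w1"
  unfolding CL_def using assms H_nonneg by (auto intro!: divide_nonneg_pos)

lemma CU_nonneg:
  assumes "U \<noteq> {} \<Longrightarrow> 0 < (LBINT v. indicator {w0..w1} v * h v)"
  shows "0 \<le> CU K0 w0 w1"
  unfolding CU_def using assms H_nonneg by (auto intro!: divide_nonneg_pos)

lemma eps_nonneg_le1:
  assumes k: "1 \<le> k" "k \<le> n"
  shows "0 \<le> eps_W2 (os_cdf FX n k) (os_cdf FY n k)" "eps_W2 (os_cdf FX n k) (os_cdf FY n k) \<le> 1"
  unfolding eps_formula[OF k] using Nr_nonneg[OF k] Wr_nonneg[OF k] Nr_le_Wr[OF k]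
  by (auto simp: divide_le_eq)

lemma eps_zero_if_empty:
  assumes k: "1 \<le> k" "k \<le> n" and LU: "L = {}" "U = {}"
  shows "eps_W2 (os_cdf FX n k) (os_cdf FY n k) = 0"
proof -
  have "Rv = {}" using Rsplit LU by blast
  then have "Nr n k = 0" by (simp add: Nr_def)
  then show ?thesis unfolding eps_formula[OF k] by simp
qed

end


context main begin

lemma mono_low:
  assumes k: "1 \<le> k" "k \<le> n" and n2: "2 \<le> n" and v: "0 < v" "v \<le> p" and p: "p < 1"
    and c: "p \<le> real (k-1) / real (n-1)"
  shows "v^(k-1) * (1-v)^(n-k) \<le> p^(k-1) * (1-p)^(n-k)"
proof -
  have m: "0 < n - 1" "k - 1 \<le> n - 1" using k n2 by auto
  have nk: "n - 1 - (k - 1) = n - k" using k by simp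
  have v1: "v < 1" using v p by simp
  have p0: "0 < p" using v by simp
  have "gf (real (k-1) / real (n-1)) v \<le> gf (real (k-1) / real (n-1)) p"
    by (rule gf_up[OF v(1) v(2) c p])
  then have "exp (real (n-1) * gf (real (k-1) / real (n-1)) v) \<le> exp (real (n-1) * gf (real (k-1) / real (n-1)) p)"
    by (simp add: mult_left_mono)
  then show ?thesis using pow_exp[OF v(1) v1 m] pow_exp[OF p0 p m] unfolding nk by simp
qed

lemma mono_high:
  assumes k: "1 \<le> k" "k \<le> n" and n2: "2 \<le> n" and v: "p \<le> v" "v < 1" and p: "0 < p"
    and c: "real (k-1) / real (n-1) \<le> p"
  shows "v^(k-1) * (1-v)^(n-k) \<le> p^(k-1) * (1-p)^(n-k)"
proof -
  have m: "0 < n - 1" "k - 1 \<le> n - 1" using k n2 by auto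
  have nk: "n - 1 - (k - 1) = n - k" using k by simp
  have v0: "0 < v" using v p by simp
  have p1: "p < 1" using v by simp
  have "gf (real (k-1) / real (n-1)) v \<le> gf (real (k-1) / real (n-1)) p"
    by (rule gf_down[OF p v(1) c v(2)])
  then have "exp (real (n-1) * gf (real (k-1) / real (n-1)) v) \<le> exp (real (n-1) * gf (real (k-1) / real (n-1)) p)"
    by (simp add: mult_left_mono)
  then show ?thesis using pow_exp[OF v0 v(2) m] pow_exp[OF p p1 m] unfolding nk by simp
qed

lemma nbound:
  assumes e: "0 < e" "e < e0"
   and IL: "L \<noteq> {} \<Longrightarrow> 0 < wL0 \<and> wL0 < wL1 \<and> wL1 < 1 \<and> pa - e \<le> wL0 \<and> wL1 \<le> pa \<and> (\<forall>w\<in>{wL0..wL1}. 0 < h w)"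
   and IU: "U \<noteq> {} \<Longrightarrow> 0 < wU0 \<and> wU0 < wU1 \<and> wU1 < 1 \<and> pb \<le> wU0 \<and> wU1 \<le> pb + e \<and> (\<forall>w\<in>{wU0..wU1}. 0 < h w)"
   and k: "1 \<le> k" "k \<le> n" and n2: "2 \<le> n"
   and K: "\<bar>real (k-1) - g * real (n-1)\<bar> \<le> K0"
   and cL: "L \<noteq> {} \<Longrightarrow> pc \<le> real (k-1) / real (n-1)"
   and cU: "U \<noteq> {} \<Longrightarrow> real (k-1) / real (n-1) \<le> pd"
  shows "eps_W2 (os_cdf FX n k) (os_cdf FY n k) \<le> (CL K0 wL0 wL1 + CU K0 wU0 wU1) * z_rate FX FY g e ^ (n-1)"
proof -
  define z where "z = z_rate FX FY g e"
  note zf = z_facts[OF e, folded z_def]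
  define Lo where "Lo = (if L \<noteq> {} then {0<..pc} else {})"
  define Hi where "Hi = (if U \<noteq> {} then {pd..<1} else {})"
  have Lo_sub: "Lo \<subseteq> {0<..<1}"
  proof (cases "L = {}")
    case False
    then have "pc < 1" using tL_props[OF False e] by simp
    then show ?thesis using False by (auto simp: Lo_def)
  qed (simp add: Lo_def)
  have Hi_sub: "Hi \<subseteq> {0<..<1}"
  proof (cases "U = {}")
    case False
    then have "0 < pd" using tU_props[OF False e] by simp
    then show ?thesis using False by (auto simp: Hi_def)
  qed (simp add: Hi_def)
  have Lo_m: "Lo \<in> sets borel" by (simp add: Lo_def)
  have Hi_m: "Hi \<in> sets borel" by (simp add: Hi_def)
  have iHb: "integrable lborel (\<lambda>v. indicator {0<..<1} v * (h v * bdens n k v))" by (rule hb_int[OF k])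
  have iLo: "integrable lborel (\<lambda>v. indicator Lo v * (h v * bdens n k v))" by (rule int_sub[OF iHb Lo_sub Lo_m])
  have iHi: "integrable lborel (\<lambda>v. indicator Hi v * (h v * bdens n k v))" by (rule int_sub[OF iHb Hi_sub Hi_m])
  have Nsplit: "Nr n k \<le> (LBINT v. indicator Lo v * (h v * bdens n k v)) + (LBINT v. indicator Hi v * (h v * bdens n k v))"
  proof -
    have "Nr n k \<le> (LBINT v. indicator Lo v * (h v * bdens n k v) + indicator Hi v * (h v * bdens n k v))"
      unfolding Nr_def
    proof (rule integral_mono[OF hbR_int[OF k] Bochner_Integration.integrable_add[OF iLo iHi]])
      fix v
      show "indicator Rv v * (h v * bdens n k v) \<le> indicator Lo v * (h v * bdens n k v) + indicator Hi v * (h v * bdens n k v)"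
      proof (cases "v \<in> Rv")
        case True
        then have v01: "0 < v" "v < 1" by (auto simp: Rv_def)
        have hb0: "0 \<le> h v * bdens n k v" using bdens_nonneg[OF k, of v] h_nonneg[of v] v01 by simp
        have "v \<in> Lo \<or> v \<in> Hi" using Rsplit[OF True] v01 by (auto simp: Lo_def Hi_def)
        then show ?thesis using True hb0 by (auto simp: indicator_def)
      next
        case False
        have "0 \<le> indicator Lo v * (h v * bdens n k v)"
          using Lo_sub bdens_nonneg[OF k, of v] h_nonneg[of v] by (auto simp: indicator_def)
        moreover have "0 \<le> indicator Hi v * (h v * bdens n k v)"
          using Hi_sub bdens_nonneg[OF k, of v] h_nonneg[of v] by (auto simp: indicator_def)
        ultimately show ?thesis using False by simp
      qed
    qed
    also have "\<dots> = (LBINT v. indicator Lo v * (h v * bdens n k v)) + (LBINT v. indicator Hi v * (h v * bdens n k v))"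
      by (rule Bochner_Integration.integral_add[OF iLo iHi])
    finally show ?thesis .
  qed
  have Wn: "0 \<le> Wr n k" by (rule Wr_nonneg[OF k])
  have BL: "(LBINT v. indicator Lo v * (h v * bdens n k v)) \<le> CL K0 wL0 wL1 * z ^ (n-1) * Wr n k"
  proof (cases "L = {}")
    case True then show ?thesis by (simp add: Lo_def CL_def)
  next
    case False
    note I = IL[OF False]
    note tp = tL_props[OF False e]
    have HI: "0 < (LBINT v. indicator {wL0..wL1} v * h v)" by (rule HI_pos) (use I in auto)
    have G: "\<forall>w\<in>{wL0..wL1}. gf g (pa - e) \<le> gf g w"
    proof
      fix w assume w: "w \<in> {wL0..wL1}"
      show "gf g (pa - e) \<le> gf g w" by (rule gf_up) (use w I tp pa_le in auto)
    qed
    have mono: "\<forall>v\<in>{0<..pc}. v^(k-1) * (1-v)^(n-k) \<le> pc^(k-1) * (1-pc)^(n-k)"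
    proof
      fix v assume v: "v \<in> {0<..pc}"
      show "v^(k-1) * (1-v)^(n-k) \<le> pc^(k-1) * (1-pc)^(n-k)"
        by (rule mono_low[OF k n2]) (use v tp cL[OF False] in auto)
    qed
    have pb1: "(LBINT v. indicator {0<..pc} v * (h v * bdens n k v)) \<le>
      exp (gf g pc - gf g (pa - e)) ^ (n-1) * (exp (K0 * (lam pc + (lam wL0 + lam wL1))) *
       ((LBINT v. indicator {0<..<1} v * h v) / (LBINT v. indicator {wL0..wL1} v * h v))) * Wr n k"
      by (rule part_bound[OF k n2 _ _ mono _ _ _ _ _ G K HI]) (use tp I in auto)
    have CLv: "CL K0 wL0 wL1 = exp (K0 * (lam pc + (lam wL0 + lam wL1))) *
       ((LBINT v. indicator {0<..<1} v * h v) / (LBINT v. indicator {wL0..wL1} v * h v))"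
      using False by (simp add: CL_def)
    have CL0: "0 \<le> CL K0 wL0 wL1" by (rule CL_nonneg) (use HI in simp)
    have tz: "tL e ^ (n-1) \<le> z ^ (n-1)" by (rule power_mono) (use zf(3)[OF False] tp in auto)
    have "(LBINT v. indicator Lo v * (h v * bdens n k v)) \<le> tL e ^ (n-1) * CL K0 wL0 wL1 * Wr n k"
      using pb1 False unfolding CLv[symmetric] tL_def Lo_def by simp
    also have "\<dots> \<le> z ^ (n-1) * CL K0 wL0 wL1 * Wr n k"
      by (intro mult_right_mono tz CL0 Wn)
    finally show ?thesis by (simp add: algebra_simps)
  qed
  have BU: "(LBINT v. indicator Hi v * (h v * bdens n k v)) \<le> CU K0 wU0 wU1 * z ^ (n-1) * Wr n k"
  proof (cases "U = {}")
    case True then show ?thesis by (simp add: Hi_def CU_def)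
  next
    case False
    note I = IU[OF False]
    note tp = tU_props[OF False e]
    have HI: "0 < (LBINT v. indicator {wU0..wU1} v * h v)" by (rule HI_pos) (use I in auto)
    have G: "\<forall>w\<in>{wU0..wU1}. gf g (pb + e) \<le> gf g w"
    proof
      fix w assume w: "w \<in> {wU0..wU1}"
      show "gf g (pb + e) \<le> gf g w" by (rule gf_down) (use w I tp pb_ge in auto)
    qed
    have mono: "\<forall>v\<in>{pd..<1}. v^(k-1) * (1-v)^(n-k) \<le> pd^(k-1) * (1-pd)^(n-k)"
    proof
      fix v assume v: "v \<in> {pd..<1}"
      show "v^(k-1) * (1-v)^(n-k) \<le> pd^(k-1) * (1-pd)^(n-k)"
        by (rule mono_high[OF k n2]) (use v tp cU[OF False] in auto)
    qed
    have pd0: "0 < pd" using tp by simp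
    have pb1: "(LBINT v. indicator {pd..<1} v * (h v * bdens n k v)) \<le>
      exp (gf g pd - gf g (pb + e)) ^ (n-1) * (exp (K0 * (lam pd + (lam wU0 + lam wU1))) *
       ((LBINT v. indicator {0<..<1} v * h v) / (LBINT v. indicator {wU0..wU1} v * h v))) * Wr n k"
      by (rule part_bound[OF k n2 _ _ mono _ _ _ _ _ G K HI]) (use tp I pd0 in auto)
    have CUv: "CU K0 wU0 wU1 = exp (K0 * (lam pd + (lam wU0 + lam wU1))) *
       ((LBINT v. indicator {0<..<1} v * h v) / (LBINT v. indicator {wU0..wU1} v * h v))"
      using False by (simp add: CU_def)
    have CU0: "0 \<le> CU K0 wU0 wU1" by (rule CU_nonneg) (use HI in simp)
    have tz: "tU e ^ (n-1) \<le> z ^ (n-1)" by (rule power_mono) (use zf(4)[OF False] tp in auto)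
    have "(LBINT v. indicator Hi v * (h v * bdens n k v)) \<le> tU e ^ (n-1) * CU K0 wU0 wU1 * Wr n k"
      using pb1 False unfolding CUv[symmetric] tU_def Hi_def by simp
    also have "\<dots> \<le> z ^ (n-1) * CU K0 wU0 wU1 * Wr n k"
      by (intro mult_right_mono tz CU0 Wn)
    finally show ?thesis by (simp add: algebra_simps)
  qed
  have Nb: "Nr n k \<le> (CL K0 wL0 wL1 + CU K0 wU0 wU1) * z ^ (n-1) * Wr n k"
    using Nsplit BL BU by (simp add: algebra_simps)
  have C0: "0 \<le> (CL K0 wL0 wL1 + CU K0 wU0 wU1) * z ^ (n-1)"
  proof -
    have "0 \<le> CL K0 wL0 wL1"
      by (rule CL_nonneg, rule HI_pos) (use IL in auto)
    moreover have "0 \<le> CU K0 wU0 wU1"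
      by (rule CU_nonneg, rule HI_pos) (use IU in auto)
    ultimately show ?thesis using zf(1) by simp
  qed
  show ?thesis
  proof (cases "Wr n k = 0")
    case True then show ?thesis using C0 unfolding eps_formula[OF k] z_def by simp
  next
    case False
    then have "0 < Wr n k" using Wn by simp
    then show ?thesis using Nb unfolding eps_formula[OF k] z_def using False by (simp add: divide_le_eq)
  qed
qed

end


context main begin

lemma main_result:
  fixes gs :: "nat \<Rightarrow> real"
  assumes gs01: "\<And>n. gs n \<in> {0..1}" and gsO: "(\<lambda>n. gs n - g) \<in> O(\<lambda>n. 1 / real n)"
    and e: "0 < e" "e < e0"
  shows "\<exists>C\<ge>0. \<forall>n\<ge>1. eps_W2 (os_cdf FX n (1 + nat \<lfloor>real (n - 1) * gs n\<rfloor>))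
           (os_cdf FY n (1 + nat \<lfloor>real (n - 1) * gs n\<rfloor>)) \<le> C * z_rate FX FY g e ^ (n - 1)"
proof -
  define kk where "kk n = 1 + nat \<lfloor>real (n-1) * gs n\<rfloor>" for n
  define z where "z = z_rate FX FY g e"
  define eps where "eps n = eps_W2 (os_cdf FX n (kk n)) (os_cdf FY n (kk n))" for n
  note zf = z_facts[OF e, folded z_def]
  have kb: "1 \<le> kk n" "kk n \<le> n" if "1 \<le> n" for n
    using k_bounds[OF gs01 that] by (simp_all add: kk_def)
  have eps01: "0 \<le> eps n" "eps n \<le> 1" if "1 \<le> n" for n
    using eps_nonneg_le1[OF kb[OF that]] by (simp_all add: eps_def)
  have goal: "\<exists>C\<ge>0. \<forall>n\<ge>1. eps n \<le> C * z ^ (n - 1)"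
  proof (cases "L = {} \<and> U = {}")
    case True
    then have "eps n = 0" if "1 \<le> n" for n
      using eps_zero_if_empty[OF kb[OF that]] by (simp add: eps_def)
    then show ?thesis by (intro exI[of _ 0]) auto
  next
    case False
    have zpos: "0 < z"
    proof (cases "L = {}")
      case True
      then have "U \<noteq> {}" using False by simp
      then show ?thesis using zf(4) tU_props[OF _ e] by (meson less_le_trans)
    next
      case False
      then show ?thesis using zf(3) tL_props[OF _ e] by (meson less_le_trans)
    qed
    obtain cK where cK: "0 < cK" "eventually (\<lambda>n. norm (gs n - g) \<le> cK * norm (1 / real n)) at_top"
      using gsO unfolding bigo_def by auto
    obtain N1 where N1: "\<And>n. n \<ge> N1 \<Longrightarrow> \<bar>gs n - g\<bar> \<le> cK * \<bar>1 / real n\<bar>"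
      using cK(2) unfolding eventually_at_top_linorder by auto
    define K0 where "K0 = 1 + cK"
    have K0: "0 < K0" using cK by (simp add: K0_def)
    have Kb: "\<bar>real (kk n - 1) - g * real (n-1)\<bar> \<le> K0" if "n \<ge> N1" "1 \<le> n" for n
      using K_bound[OF gs01 that(2) cK(1) N1[OF that(1)]] by (simp add: kk_def K0_def)
    have "\<exists>wL0 wL1. L \<noteq> {} \<longrightarrow> (0 < wL0 \<and> wL0 < wL1 \<and> wL1 < 1 \<and> pa - e \<le> wL0 \<and> wL1 \<le> pa \<and> (\<forall>w\<in>{wL0..wL1}. 0 < h w))"
    proof (cases "L = {}")
      case False
      have "e < pa - pc" using e False unfolding e0_def by (auto split: if_splits)
      then show ?thesis using interval_L[OF False e(1)] by blast
    qed simp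
    then obtain wL0 wL1 where IL: "L \<noteq> {} \<Longrightarrow> 0 < wL0 \<and> wL0 < wL1 \<and> wL1 < 1 \<and> pa - e \<le> wL0 \<and> wL1 \<le> pa \<and> (\<forall>w\<in>{wL0..wL1}. 0 < h w)"
      by blast
    have "\<exists>wU0 wU1. U \<noteq> {} \<longrightarrow> (0 < wU0 \<and> wU0 < wU1 \<and> wU1 < 1 \<and> pb \<le> wU0 \<and> wU1 \<le> pb + e \<and> (\<forall>w\<in>{wU0..wU1}. 0 < h w))"
    proof (cases "U = {}")
      case False
      have "e < pd - pb" using e False unfolding e0_def by (auto split: if_splits)
      then show ?thesis using interval_U[OF False e(1)] by blast
    qed simp
    then obtain wU0 wU1 where IU: "U \<noteq> {} \<Longrightarrow> 0 < wU0 \<and> wU0 < wU1 \<and> wU1 < 1 \<and> pb \<le> wU0 \<and> wU1 \<le> pb + e \<and> (\<forall>w\<in>{wU0..wU1}. 0 < h w)"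
      by blast
    define NL where "NL = (if L \<noteq> {} then nat \<lceil>K0 / (g - pc)\<rceil> + 2 else 0)"
    define NU where "NU = (if U \<noteq> {} then nat \<lceil>K0 / (pd - g)\<rceil> + 2 else 0)"
    define N0 where "N0 = max (max N1 2) (max NL NU)"
    have cL: "pc \<le> real (kk n - 1) / real (n-1)" if "n \<ge> N0" "L \<noteq> {}" for n
    proof -
      have n: "n \<ge> N1" "n \<ge> 2" "n \<ge> NL" using that by (auto simp: N0_def)
      have gp: "0 < g - pc" using pc_pa[OF that(2)] pa_le by simp
      have m: "K0 / (g - pc) \<le> real (n-1)"
      proof -
        have "K0 / (g - pc) \<le> real (nat \<lceil>K0 / (g - pc)\<rceil>)" by linarith
        also have "\<dots> \<le> real (n-1)" using n(3) that(2) by (simp add: NL_def)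
        finally show ?thesis .
      qed
      have m0: "0 < real (n-1)" using n by simp
      have "K0 \<le> (g - pc) * real (n-1)" using m gp by (simp add: divide_le_eq mult.commute)
      moreover have "g * real (n-1) - K0 \<le> real (kk n - 1)" using Kb[OF n(1)] n by simp
      ultimately have "pc * real (n-1) \<le> real (kk n - 1)" by (simp add: algebra_simps)
      then show ?thesis using m0 by (simp add: le_divide_eq)
    qed
    have cU: "real (kk n - 1) / real (n-1) \<le> pd" if "n \<ge> N0" "U \<noteq> {}" for n
    proof -
      have n: "n \<ge> N1" "n \<ge> 2" "n \<ge> NU" using that by (auto simp: N0_def)
      have gp: "0 < pd - g" using pb_pd[OF that(2)] pb_ge by simp
      have m: "K0 / (pd - g) \<le> real (n-1)"
      proof -
        have "K0 / (pd - g) \<le> real (nat \<lceil>K0 / (pd - g)\<rceil>)" by linarith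
        also have "\<dots> \<le> real (n-1)" using n(3) that(2) by (simp add: NU_def)
        finally show ?thesis .
      qed
      have m0: "0 < real (n-1)" using n by simp
      have "K0 \<le> (pd - g) * real (n-1)" using m gp by (simp add: divide_le_eq mult.commute)
      moreover have "real (kk n - 1) \<le> g * real (n-1) + K0" using Kb[OF n(1)] n by simp
      ultimately have "real (kk n - 1) \<le> pd * real (n-1)" by (simp add: algebra_simps)
      then show ?thesis using m0 by (simp add: divide_le_eq)
    qed
    define Kc where "Kc = CL K0 wL0 wL1 + CU K0 wU0 wU1"
    have Kc0: "0 \<le> Kc"
    proof -
      have "0 \<le> CL K0 wL0 wL1" by (rule CL_nonneg, rule HI_pos) (use IL in auto)
      moreover have "0 \<le> CU K0 wU0 wU1" by (rule CU_nonneg, rule HI_pos) (use IU in auto)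
      ultimately show ?thesis by (simp add: Kc_def)
    qed
    have big: "eps n \<le> Kc * z ^ (n - 1)" if "n \<ge> N0" for n
    proof -
      have n: "n \<ge> N1" "n \<ge> 2" using that by (auto simp: N0_def)
      show ?thesis unfolding eps_def Kc_def z_def
        by (rule nbound[OF e IL IU kb[of n] n(2) Kb[OF n(1)] cL[OF that] cU[OF that]]) (use n in auto)
    qed
    define C where "C = max Kc (1 / z ^ N0)"
    show ?thesis
    proof (intro exI[of _ C] conjI allI impI)
      show "0 \<le> C" using Kc0 by (simp add: C_def)
      fix n :: nat assume n1: "1 \<le> n"
      show "eps n \<le> C * z ^ (n - 1)"
      proof (cases "n \<ge> N0")
        case True
        have "Kc * z ^ (n - 1) \<le> C * z ^ (n - 1)"
          by (rule mult_right_mono) (use zf(1) in \<open>auto simp: C_def\<close>)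
        then show ?thesis using big[OF True] by simp
      next
        case False
        have "z ^ N0 \<le> z ^ (n - 1)" by (rule power_decreasing) (use False zf in auto)
        then have "(1 / z ^ N0) * z ^ N0 \<le> (1 / z ^ N0) * z ^ (n - 1)"
          by (rule mult_left_mono) (use zpos in simp)
        then have "1 \<le> (1 / z ^ N0) * z ^ (n - 1)" using zpos by simp
        also have "\<dots> \<le> C * z ^ (n - 1)"
          by (rule mult_right_mono) (use zpos in \<open>auto simp: C_def\<close>)
        finally show ?thesis using eps01(2)[OF n1] by linarith
      qed
    qed
  qed
  then show ?thesis unfolding eps_def kk_def z_def .
qed

end


theorem theorem3p8:
  fixes FX FY :: "real \<Rightarrow> real" and \<gamma> :: real and \<gamma>s :: "nat \<Rightarrow> real"
  assumes cdfX: "is_cdf FX" and contX: "continuous_on UNIV FX" and smX: "strict_mono FX"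
      and momX: "finite_second_moment FX"
      and cdfY: "is_cdf FY" and contY: "continuous_on UNIV FY" and smY: "strict_mono FY"
      and momY: "finite_second_moment FY"
      and gam: "\<gamma> \<in> {0..1}"
      and hc: "B0 FX FY \<inter> {x. ereal x < qinv_e FX \<gamma>} \<noteq> {} \<Longrightarrow> c_pt FX FY \<gamma> < a_pt FX FY \<gamma>"
      and hd: "B0 FX FY \<inter> {x. qinv_e FX \<gamma> < ereal x} \<noteq> {} \<Longrightarrow> b_pt FX FY \<gamma> < d_pt FX FY \<gamma>"
      and gs01: "\<And>n. \<gamma>s n \<in> {0..1}"
      and gsO: "(\<lambda>n. \<gamma>s n - \<gamma>) \<in> O(\<lambda>n. 1 / real n)"
  shows "(\<exists>\<epsilon>0>0. \<forall>\<epsilon>. 0 < \<epsilon> \<and> \<epsilon> < \<epsilon>0 \<longrightarrow>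
            0 \<le> z_rate FX FY \<gamma> \<epsilon> \<and> z_rate FX FY \<gamma> \<epsilon> < 1 \<and>
            (\<exists>C\<ge>0. \<forall>n\<ge>1.
               eps_W2 (os_cdf FX n (1 + nat \<lfloor>real (n - 1) * \<gamma>s n\<rfloor>))
                      (os_cdf FY n (1 + nat \<lfloor>real (n - 1) * \<gamma>s n\<rfloor>))
               \<le> C * z_rate FX FY \<gamma> \<epsilon> ^ (n - 1)))
       \<and> d_ast_le (\<lambda>n. os_cdf FX n (1 + nat \<lfloor>real (n - 1) * \<gamma>s n\<rfloor>))
                  (\<lambda>n. os_cdf FY n (1 + nat \<lfloor>real (n - 1) * \<gamma>s n\<rfloor>))"
proof -
  interpret main FX FY \<gamma>
  proof unfold_locales
    show "(FX \<longlongrightarrow> 0) at_bot" "(FX \<longlongrightarrow> 1) at_top" using cdfX by (auto simp: is_cdf_def)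
    show "(FY \<longlongrightarrow> 0) at_bot" "(FY \<longlongrightarrow> 1) at_top" using cdfY by (auto simp: is_cdf_def)
  qed (use assms in auto)
  have part1: "\<exists>\<epsilon>0>0. \<forall>\<epsilon>. 0 < \<epsilon> \<and> \<epsilon> < \<epsilon>0 \<longrightarrow>
            0 \<le> z_rate FX FY \<gamma> \<epsilon> \<and> z_rate FX FY \<gamma> \<epsilon> < 1 \<and>
            (\<exists>C\<ge>0. \<forall>n\<ge>1.
               eps_W2 (os_cdf FX n (1 + nat \<lfloor>real (n - 1) * \<gamma>s n\<rfloor>))
                      (os_cdf FY n (1 + nat \<lfloor>real (n - 1) * \<gamma>s n\<rfloor>))
               \<le> C * z_rate FX FY \<gamma> \<epsilon> ^ (n - 1))"
  proof (rule exI[of _ e0], intro conjI allI impI)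
    show "0 < e0" by (rule e0_pos)
    fix e assume e: "0 < e \<and> e < e0"
    then show "0 \<le> z_rate FX FY \<gamma> e" "z_rate FX FY \<gamma> e < 1" using z_facts by auto
    show "\<exists>C\<ge>0. \<forall>n\<ge>1. eps_W2 (os_cdf FX n (1 + nat \<lfloor>real (n - 1) * \<gamma>s n\<rfloor>))
                      (os_cdf FY n (1 + nat \<lfloor>real (n - 1) * \<gamma>s n\<rfloor>))
               \<le> C * z_rate FX FY \<gamma> e ^ (n - 1)"
      by (rule main_result[OF gs01 gsO]) (use e in auto)
  qed
  define e where "e = e0 / 2"
  have e: "0 < e" "e < e0" using e0_pos by (auto simp: e_def)
  define z where "z = z_rate FX FY \<gamma> e"
  have z: "0 \<le> z" "z < 1" using z_facts[OF e] by (auto simp: z_def)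
  obtain C where C: "\<And>n. n \<ge> 1 \<Longrightarrow> eps_W2 (os_cdf FX n (1 + nat \<lfloor>real (n - 1) * \<gamma>s n\<rfloor>))
                      (os_cdf FY n (1 + nat \<lfloor>real (n - 1) * \<gamma>s n\<rfloor>)) \<le> C * z ^ (n - 1)"
    using main_result[OF gs01 gsO e] unfolding z_def by blast
  have part2: "d_ast_le (\<lambda>n. os_cdf FX n (1 + nat \<lfloor>real (n - 1) * \<gamma>s n\<rfloor>))
                  (\<lambda>n. os_cdf FY n (1 + nat \<lfloor>real (n - 1) * \<gamma>s n\<rfloor>))"
    unfolding d_ast_le_def
  proof (rule tendsto_sandwich[of "\<lambda>n. 0" _ sequentially "\<lambda>n. C * z ^ (n - 1)"])
    show "\<forall>\<^sub>F n in sequentially. 0 \<le> eps_W2 (os_cdf FX n (1 + nat \<lfloor>real (n - 1) * \<gamma>s n\<rfloor>))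
                      (os_cdf FY n (1 + nat \<lfloor>real (n - 1) * \<gamma>s n\<rfloor>))"
    proof (rule eventually_sequentiallyI[of 1])
      fix n :: nat assume n: "1 \<le> n"
      show "0 \<le> eps_W2 (os_cdf FX n (1 + nat \<lfloor>real (n - 1) * \<gamma>s n\<rfloor>))
                      (os_cdf FY n (1 + nat \<lfloor>real (n - 1) * \<gamma>s n\<rfloor>))"
        using eps_nonneg_le1(1)[OF k_bounds[OF gs01 n]] .
    qed
    show "\<forall>\<^sub>F n in sequentially. eps_W2 (os_cdf FX n (1 + nat \<lfloor>real (n - 1) * \<gamma>s n\<rfloor>))
                      (os_cdf FY n (1 + nat \<lfloor>real (n - 1) * \<gamma>s n\<rfloor>)) \<le> C * z ^ (n - 1)"
      by (rule eventually_sequentiallyI[of 1]) (rule C)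
    show "(\<lambda>n. 0::real) \<longlonglongrightarrow> 0" by simp
    have "(\<lambda>n. z ^ n) \<longlonglongrightarrow> 0" by (rule LIMSEQ_power_zero) (use z in simp)
    then have "(\<lambda>n. z ^ (Suc n - 1)) \<longlonglongrightarrow> 0" by simp
    then have "(\<lambda>n. z ^ (n - 1)) \<longlonglongrightarrow> 0" by (rule LIMSEQ_imp_Suc)
    then have "(\<lambda>n. C * z ^ (n - 1)) \<longlonglongrightarrow> C * 0" by (rule tendsto_mult[OF tendsto_const])
    then show "(\<lambda>n. C * z ^ (n - 1)) \<longlonglongrightarrow> 0" by simp
  qed
  show ?thesis using part1 part2 by blast
qed


end
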